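(* Let $n\ge2$, $q=2^m$, and let $\mathbf{H}_X^{(q)}$, $\mathbf{H}_Z^{(q)}$ be $q$-ary labelings of the toric Tanner graphs $\mathcal{G}_X$, $\mathcal{G}_Z$ (as defined in the context) with codes $\mathcal{C}_X^{(q)}$, $\mathcal{C}_Z^{(q)}$, such that $(\mathcal{C}_Z^{(q)})^\perp\subset\mathcal{C}_X^{(q)}$ and every cycle of the labeled graph $\mathcal{G}_X$ has product $1$. Then $$\min\{|x| : x\in\mathcal{C}_X^{(q)}\setminus(\mathcal{C}_Z^{(q)})^\perp\}=\min\{|x| : x\in\mathcal{C}_Z^{(q)}\setminus(\mathcal{C}_X^{(q)})^\perp\}=n,$$ where $|x|$ is the Hamming weight.
   Context: Indices are taken in $\mathbb{Z}_{2n}=\{0,\dots,2n-1\}$ with arithmetic mod $2n$. Variable nodes: $V=\{(i,j)\in\mathbb{Z}_{2n}^2: i+j\text{ even}\}$. $X$-check nodes: $C_X=\{(i,j): i\text{ odd}, j\text{ even}\}$; $Z$-check nodes: $C_Z=\{(i,j): i\text{ even}, j\text{ odd}\}$. Each check node $(i,j)$ is adjacent to the four variable nodes $(i\pm1,j)$, $(i,j\pm1)$. $\mathcal{G}_X$ is the bipartite graph on $V\cup C_X$ and $\mathcal{G}_Z$ on $V\cup C_Z$. A $q$-ary labeling is a matrix $\mathbf{H}_X^{(q)}=(x_{c,v})\in\mathbb{F}_q^{C_X\times V}$ with $x_{c,v}\neq0$ iff $c,v$ adjacent, and similarly $\mathbf{H}_Z^{(q)}=(z_{c,v})\in\mathbb{F}_q^{C_Z\times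 V}$. $\mathcal{C}_X^{(q)}=\ker\mathbf{H}_X^{(q)}\subset\mathbb{F}_q^V$, $\mathcal{C}_Z^{(q)}=\ker\mathbf{H}_Z^{(q)}$, and $\perp$ is with respect to the standard bilinear form on $\mathbb{F}_q^V$. For a cycle $v_1,c_1,v_2,\dots,v_k,c_k,v_1$ of labeled $\mathcal{G}_X$ its product is $\prod_{t=1}^k x_{c_t v_{t+1}}x_{c_t v_t}^{-1}$ (indices of $v$ mod $k$). *)

theory Defs
  imports Main
begin

text \<open>Indices in Z_{2n} are represented by naturals 0..<2n, arithmetic mod 2n.\<close>

definition tor_V :: "nat \<Rightarrow> (nat \<times> nat) set" where
  "tor_V n = {(i, j). i < 2*n \<and> j < 2*n \<and> even (i + j)}"

definition tor_CX :: "nat \<Rightarrow> (nat \<times> nat) set" where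
  "tor_CX n = {(i, j). i < 2*n \<and> j < 2*n \<and> odd i \<and> even j}"

definition tor_CZ :: "nat \<Rightarrow> (nat \<times> nat) set" where
  "tor_CZ n = {(i, j). i < 2*n \<and> j < 2*n \<and> even i \<and> odd j}"

definition tor_adj :: "nat \<Rightarrow> nat \<times> nat \<Rightarrow> nat \<times> nat \<Rightarrow> bool" where
  "tor_adj n c v = (case c of (i, j) \<Rightarrow>
     v \<in> {((i + 1) mod (2*n), j), ((i + 2*n - 1) mod (2*n), j),
           (i, (j + 1) mod (2*n)), (i, (j + 2*n - 1) mod (2*n))})"

definition is_labeling ::
  "nat \<Rightarrow> (nat \<times> nat) set \<Rightarrow> (nat \<times> nat \<Rightarrow> nat \<times> nat \<Rightarrow> 'a::field) \<Rightarrow> bool" where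
  "is_labeling n C H = (\<forall>c\<in>C. \<forall>v\<in>tor_V n. (H c v \<noteq> 0) = tor_adj n c v)"

text \<open>Vectors in F_q^V are functions vanishing outside V.\<close>
definition vecs :: "nat \<Rightarrow> (nat \<times> nat \<Rightarrow> 'a::zero) set" where
  "vecs n = {x. \<forall>v. v \<notin> tor_V n \<longrightarrow> x v = 0}"

definition code_ker ::
  "nat \<Rightarrow> (nat \<times> nat) set \<Rightarrow> (nat \<times> nat \<Rightarrow> nat \<times> nat \<Rightarrow> 'a::field) \<Rightarrow> (nat \<times> nat \<Rightarrow> 'a) set" where
  "code_ker n C H = {x \<in> vecs n. \<forall>c\<in>C. (\<Sum>v\<in>tor_V n. H c v * x v) = 0}"

definition dual_code :: "nat \<Rightarrow> (nat \<times> nat \<Rightarrow> 'a::field) set \<Rightarrow> (nat \<times> nat \<Rightarrow> 'a) set" where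
  "dual_code n S = {y \<in> vecs n. \<forall>x\<in>S. (\<Sum>v\<in>tor_V n. x v * y v) = 0}"

definition hweight :: "nat \<Rightarrow> (nat \<times> nat \<Rightarrow> 'a::zero) \<Rightarrow> nat" where
  "hweight n x = card {v \<in> tor_V n. x v \<noteq> 0}"

text \<open>A cycle v_1,c_1,v_2,...,v_k,c_k,v_1 in the bipartite graph on V and C
  (k >= 2, vertices pairwise distinct), given as lists vs, cs of length k
  (0-indexed).\<close>
definition is_cycle ::
  "nat \<Rightarrow> (nat \<times> nat) set \<Rightarrow> (nat \<times> nat) list \<Rightarrow> (nat \<times> nat) list \<Rightarrow> bool" where
  "is_cycle n C vs cs = (length vs = length cs \<and> length vs \<ge> 2 \<and>
      distinct vs \<and> distinct cs \<and> set vs \<subseteq> tor_V n \<and> set cs \<subseteq> C \<and>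
      (\<forall>t < length vs. tor_adj n (cs ! t) (vs ! t) \<and>
                        tor_adj n (cs ! t) (vs ! ((t + 1) mod length vs))))"

definition cycle_product ::
  "(nat \<times> nat \<Rightarrow> nat \<times> nat \<Rightarrow> 'a::field) \<Rightarrow> (nat \<times> nat) list \<Rightarrow> (nat \<times> nat) list \<Rightarrow> 'a" where
  "cycle_product H vs cs =
     (\<Prod>t < length vs. H (cs ! t) (vs ! ((t + 1) mod length vs)) * inverse (H (cs ! t) (vs ! t)))"

end

theory Submission
  imports Defs "HOL-Number_Theory.Residues"
begin



lemma char2_of_card:
  assumes "card (UNIV :: 'a::{field,finite} set) = 2 ^ m" "m \<ge> 1"
  shows "(1::'a) + 1 = 0"
proof -
  have "CHAR('a) dvd card (UNIV :: 'a set)" by (rule CHAR_dvd_CARD)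
  hence "of_nat (card (UNIV :: 'a set)) = (0::'a)" by (simp add: of_nat_eq_0_iff_char_dvd)
  hence "(2::'a) ^ m = 0" using assms(1) by simp
  hence "(2::'a) = 0" by simp
  thus ?thesis by (simp add: one_add_one)
qed



definition pr :: "nat \<Rightarrow> int \<Rightarrow> int \<Rightarrow> nat \<times> nat" where
  "pr n i j = (nat (i mod (2 * int n)), nat (j mod (2 * int n)))"

lemma h1: "n \<ge> 1 \<Longrightarrow> (nat (i mod (2*int n)) + 1) mod (2*n) = nat ((i+1) mod (2*int n))"
proof -
  assume "n \<ge> 1"
  have "int ((nat (i mod (2*int n)) + 1) mod (2*n)) = (i mod (2*int n) + 1) mod (2 * int n)"
    using \<open>n\<ge>1\<close> by (simp add: zmod_int add.commute)
  also have "\<dots> = (i+1) mod (2*int n)" by (simp add: mod_add_left_eq)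
  finally show ?thesis by simp
qed

lemma h2: "n \<ge> 1 \<Longrightarrow> (nat (i mod (2*int n)) + 2*n - 1) mod (2*n) = nat ((i-1) mod (2*int n))"
proof -
  assume a: "n \<ge> 1"
  have e: "int (nat (i mod (2*int n)) + 2*n - 1) = i mod (2*int n) + 2*int n - 1"
    using a by (simp add: of_nat_diff)
  have "int ((nat (i mod (2*int n)) + 2*n - 1) mod (2*n)) = (i mod (2*int n) + 2*int n - 1) mod (2 * int n)"
    by (simp only: zmod_int e) simp
  also have "\<dots> = (i mod (2*int n) - 1 + 2 * int n) mod (2*int n)" by (simp add: algebra_simps)
  also have "\<dots> = (i mod (2*int n) - 1) mod (2*int n)" by (rule mod_add_self2)
  also have "\<dots> = (i-1) mod (2*int n)" by (simp add: mod_diff_left_eq)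
  finally show ?thesis by simp
qed

lemma pr_eq: "n \<ge> 1 \<Longrightarrow> pr n a b = pr n c d \<longleftrightarrow> (2*int n) dvd (a - c) \<and> (2*int n) dvd (b - d)"
proof -
  assume n: "n \<ge> 1"
  have p: "2 * int n > 0" using n by simp
  have "nat (x mod (2*int n)) = nat (y mod (2*int n)) \<longleftrightarrow> (2*int n) dvd (x - y)" for x y
  proof -
    have "nat (x mod (2*int n)) = nat (y mod (2*int n)) \<longleftrightarrow> x mod (2*int n) = y mod (2*int n)"
      using p by (simp add: nat_eq_iff)
    also have "\<dots> \<longleftrightarrow> (2*int n) dvd (x - y)" by (rule mod_eq_dvd_iff)
    finally show ?thesis .
  qed
  thus ?thesis by (simp add: pr_def)
qed

lemma pr_congI: "n \<ge> 1 \<Longrightarrow> (2*int n) dvd (a - c) \<Longrightarrow> (2*int n) dvd (b - d) \<Longrightarrow> pr n a b = pr n c d"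
  using pr_eq by blast

lemma pr_shift1 [simp]: "pr n (a + 2 * int n) b = pr n a b"
  by (simp add: pr_def)
lemma pr_shift2 [simp]: "pr n a (b + 2 * int n) = pr n a b"
  by (simp add: pr_def)

lemma pr_adj: "n \<ge> 1 \<Longrightarrow> tor_adj n (pr n i j) w \<longleftrightarrow>
   w = pr n (i+1) j \<or> w = pr n (i-1) j \<or> w = pr n i (j+1) \<or> w = pr n i (j-1)"
proof -
  assume n: "n \<ge> 1"
  show ?thesis unfolding tor_adj_def pr_def split
    by (simp only: h1[OF n] h2[OF n] insert_iff empty_iff simp_thms)
qed

lemma even_nat_mod: "n \<ge> 1 \<Longrightarrow> even (nat (i mod (2 * int n))) \<longleftrightarrow> even i"
proof -
  assume n: "n \<ge> 1"
  have "even (nat (i mod (2 * int n))) \<longleftrightarrow> even (i mod (2 * int n))"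
    using n by (simp add: even_nat_iff)
  also have "\<dots> \<longleftrightarrow> even i"
    by (metis dvd_triv_left even_iff_mod_2_eq_zero mod_mod_cancel)
  finally show ?thesis .
qed

lemma nat_mod_lt: "n \<ge> 1 \<Longrightarrow> nat (i mod (2 * int n)) < 2 * n"
  by (simp add: nat_less_iff)

lemma pr_V: "n \<ge> 1 \<Longrightarrow> pr n i j \<in> tor_V n \<longleftrightarrow> even (i + j)"
proof -
  assume n: "n \<ge> 1"
  have "even (nat (i mod (2 * int n)) + nat (j mod (2 * int n))) \<longleftrightarrow> even i = even j"
    using even_nat_mod[OF n, of i] even_nat_mod[OF n, of j] by simp
  thus ?thesis using n by (simp add: pr_def tor_V_def nat_mod_lt)
qed

lemma pr_CX: "n \<ge> 1 \<Longrightarrow> pr n i j \<in> tor_CX n \<longleftrightarrow> odd i \<and> even j"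
  by (simp add: pr_def tor_CX_def nat_mod_lt even_nat_mod)

lemma pr_CZ: "n \<ge> 1 \<Longrightarrow> pr n i j \<in> tor_CZ n \<longleftrightarrow> even i \<and> odd j"
  by (simp add: pr_def tor_CZ_def nat_mod_lt even_nat_mod)

lemma pr_nat: "a < 2 * n \<Longrightarrow> b < 2 * n \<Longrightarrow> pr n (int a) (int b) = (a, b)"
  by (simp add: pr_def zmod_int[symmetric])

lemma pr_surj: "a < 2 * n \<Longrightarrow> b < 2 * n \<Longrightarrow> \<exists>i j. (a, b) = pr n i j"
  using pr_nat by metis

lemma adj_dvd: "n \<ge> 1 \<Longrightarrow> tor_adj n (pr n i j) (pr n k l) \<Longrightarrow> (2*int n) dvd (k - i) \<or> (2*int n) dvd (l - j)"
proof -
  assume n: "n \<ge> 1" and a: "tor_adj n (pr n i j) (pr n k l)"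
  from a consider "pr n k l = pr n (i+1) j" | "pr n k l = pr n (i-1) j" | "pr n k l = pr n i (j+1)" | "pr n k l = pr n i (j-1)"
    using pr_adj[OF n] by blast
  thus ?thesis
    by cases (auto simp: pr_eq[OF n])
qed

lemma adj_inv: "n \<ge> 1 \<Longrightarrow> tor_adj n (pr n i j) (pr n k l) \<Longrightarrow>
   pr n i j = pr n (k+1) l \<or> pr n i j = pr n (k-1) l \<or> pr n i j = pr n k (l+1) \<or> pr n i j = pr n k (l-1)"
proof -
  assume n: "n \<ge> 1" and a: "tor_adj n (pr n i j) (pr n k l)"
  have d: "(2*int n) dvd (x - y) \<Longrightarrow> (2*int n) dvd (y - x)" for x y :: int
    by (metis dvd_minus_iff minus_diff_eq)
  from a consider "pr n k l = pr n (i+1) j" | "pr n k l = pr n (i-1) j" | "pr n k l = pr n i (j+1)" | "pr n k l = pr n i (j-1)"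
    using pr_adj[OF n] by blast
  thus ?thesis
  proof cases
    case 1
    hence "(2*int n) dvd (k - (i+1))" "(2*int n) dvd (l - j)" using pr_eq[OF n] by blast+
    hence "pr n i j = pr n (k-1) l" using pr_congI[OF n] d by (smt (verit))
    thus ?thesis by blast
  next
    case 2
    hence "(2*int n) dvd (k - (i-1))" "(2*int n) dvd (l - j)" using pr_eq[OF n] by blast+
    hence "pr n i j = pr n (k+1) l" using pr_congI[OF n] d by (smt (verit))
    thus ?thesis by blast
  next
    case 3
    hence "(2*int n) dvd (k - i)" "(2*int n) dvd (l - (j+1))" using pr_eq[OF n] by blast+
    hence "pr n i j = pr n k (l-1)" using pr_congI[OF n] d by (smt (verit))
    thus ?thesis by blast
  next
    case 4
    hence "(2*int n) dvd (k - i)" "(2*int n) dvd (l - (j-1))" using pr_eq[OF n] by blast+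
    hence "pr n i j = pr n k (l+1)" using pr_congI[OF n] d by (smt (verit))
    thus ?thesis by blast
  qed
qed

lemma nd: "n \<ge> 2 \<Longrightarrow> 0 < \<bar>d\<bar> \<Longrightarrow> \<bar>d\<bar> < 2*int n \<Longrightarrow> \<not> (2*int n) dvd d"
  by (metis dvd_abs_iff zdvd_imp_le not_le)

lemma finite_V: "finite (tor_V n)"
proof -
  have "tor_V n \<subseteq> {..<2*n} \<times> {..<2*n}" by (auto simp: tor_V_def)
  thus ?thesis by (rule finite_subset) auto
qed

lemma finite_CZ: "finite (tor_CZ n)"
proof -
  have "tor_CZ n \<subseteq> {..<2*n} \<times> {..<2*n}" by (auto simp: tor_CZ_def)
  thus ?thesis by (rule finite_subset) auto
qed

lemma finite_CX: "finite (tor_CX n)"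
proof -
  have "tor_CX n \<subseteq> {..<2*n} \<times> {..<2*n}" by (auto simp: tor_CX_def)
  thus ?thesis by (rule finite_subset) auto
qed

lemma nbrs_distinct: "n \<ge> 2 \<Longrightarrow>
   pr n (i+1) j \<noteq> pr n (i-1) j \<and> pr n (i+1) j \<noteq> pr n i (j+1) \<and> pr n (i+1) j \<noteq> pr n i (j-1) \<and>
   pr n (i-1) j \<noteq> pr n i (j+1) \<and> pr n (i-1) j \<noteq> pr n i (j-1) \<and> pr n i (j+1) \<noteq> pr n i (j-1)"
proof -
  assume n: "n \<ge> 2"
  hence n1: "n \<ge> 1" by simp
  have a: "\<not> (2*int n) dvd 1" "\<not> (2*int n) dvd (-1)" "\<not> (2*int n) dvd 2" using nd[OF n] n by auto
  show ?thesis using a by (simp add: pr_eq[OF n1])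
qed

lemma sum_nbrs:
  assumes n: "n \<ge> 2" and lab: "is_labeling n C H" and c: "pr n i j \<in> C" and p: "odd (i + j)"
  shows "(\<Sum>v\<in>tor_V n. H (pr n i j) v * g v) =
     H (pr n i j) (pr n (i+1) j) * g (pr n (i+1) j) + H (pr n i j) (pr n (i-1) j) * g (pr n (i-1) j) +
     H (pr n i j) (pr n i (j+1)) * g (pr n i (j+1)) + H (pr n i j) (pr n i (j-1)) * g (pr n i (j-1))"
proof -
  have n1: "n \<ge> 1" using n by simp
  let ?S = "{pr n (i+1) j, pr n (i-1) j, pr n i (j+1), pr n i (j-1)}"
  have sub: "?S \<subseteq> tor_V n" using p by (auto simp: pr_V[OF n1])
  have z: "\<forall>v\<in>tor_V n - ?S. H (pr n i j) v * g v = 0"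
  proof
    fix v assume v: "v \<in> tor_V n - ?S"
    hence "\<not> tor_adj n (pr n i j) v" by (auto simp: pr_adj[OF n1])
    hence "H (pr n i j) v = 0" using lab c v unfolding is_labeling_def by blast
    thus "H (pr n i j) v * g v = 0" by simp
  qed
  have "(\<Sum>v\<in>tor_V n. H (pr n i j) v * g v) = (\<Sum>v\<in>?S. H (pr n i j) v * g v)"
    by (rule sum.mono_neutral_right[OF finite_V sub z])
  also have "\<dots> = H (pr n i j) (pr n (i+1) j) * g (pr n (i+1) j) + H (pr n i j) (pr n (i-1) j) * g (pr n (i-1) j) +
     H (pr n i j) (pr n i (j+1)) * g (pr n i (j+1)) + H (pr n i j) (pr n i (j-1)) * g (pr n i (j-1))"
    using nbrs_distinct[OF n, of i j] by (simp add: add.assoc)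
  finally show ?thesis .
qed

lemma lab_nz:
  assumes n: "n \<ge> 2" and lab: "is_labeling n C H" and c: "pr n i j \<in> C" and p: "odd (i + j)"
  shows "H (pr n i j) (pr n (i+1) j) \<noteq> 0 \<and> H (pr n i j) (pr n (i-1) j) \<noteq> 0 \<and>
         H (pr n i j) (pr n i (j+1)) \<noteq> 0 \<and> H (pr n i j) (pr n i (j-1)) \<noteq> 0"
proof -
  have n1: "n \<ge> 1" using n by simp
  have "(H (pr n i j) v \<noteq> 0) = tor_adj n (pr n i j) v" if "v \<in> tor_V n" for v
    using lab c that unfolding is_labeling_def by blast
  thus ?thesis using p by (simp add: pr_V[OF n1] pr_adj[OF n1])
qed




lemma alg_step:
  fixes a1 a2 a3 a4 y0 yL yR y4 sL sR sL' sR' bL0 bL1 bL2 bL3 bR0 bR1 bR2 bR3 :: "'a::field"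
  assumes c2: "(1::'a) + 1 = 0" and nz: "a4 \<noteq> 0" "bL2 \<noteq> 0" "bR2 \<noteq> 0"
    and IH: "y0 = sL*bL0 + sR*bR0"
    and recL: "sL' = (yL + sL * bL1) / bL2"
    and recR: "sR' = (yR + sR * bR1) / bR2"
    and star: "a2*yR + a1*yL + a4*y4 + a3*y0 = 0"
    and o1: "a1*bL1 + a3*bL0 = 0" and o2: "a2*bR1 + a3*bR0 = 0"
    and o3: "a1*bL2 + a4*bL3 = 0" and o4: "a2*bR2 + a4*bR3 = 0"
  shows "y4 = sL'*bL3 + sR'*bR3"
proof -
  have m: "x = - x" for x :: 'a
  proof -
    have "x + x = (1+1) * x" by (simp add: algebra_simps)
    thus ?thesis using c2 by (simp add: eq_neg_iff_add_eq_0)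
  qed
  have eL: "sL' * bL2 = yL + sL*bL1" using recL nz by simp
  have eR: "sR' * bR2 = yR + sR*bR1" using recR nz by simp
  have "a4 * (sL'*bL3 + sR'*bR3) = a4 * y4"
  proof -
    have h1: "a4 * bL3 = a1 * bL2" using o3 m by (metis add_eq_0_iff)
    have h2: "a4 * bR3 = a2 * bR2" using o4 m by (metis add_eq_0_iff)
    have h3: "a1*bL1 = a3*bL0" using o1 m by (metis add_eq_0_iff)
    have h4: "a2*bR1 = a3*bR0" using o2 m by (metis add_eq_0_iff)
    have h5: "a4*y4 = a2*yR + a1*yL + a3*y0" using star m by (metis add_eq_0_iff add.commute add.assoc)
    have "a4 * (sL'*bL3 + sR'*bR3) = sL' * (a4 * bL3) + sR' * (a4 * bR3)" by (simp add: algebra_simps)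
    also have "\<dots> = a1 * (sL' * bL2) + a2 * (sR' * bR2)" unfolding h1 h2 by (simp add: algebra_simps)
    also have "\<dots> = a1 * yL + sL * (a1*bL1) + a2 * yR + sR * (a2*bR1)" unfolding eL eR by (simp add: algebra_simps)
    also have "\<dots> = a1 * yL + a2 * yR + a3 * (sL*bL0 + sR*bR0)" unfolding h3 h4 by (simp add: algebra_simps)
    also have "\<dots> = a4 * y4" unfolding h5 IH by (simp add: algebra_simps)
    finally show ?thesis .
  qed
  thus ?thesis using nz by simp
qed

fun Sf :: "(int \<Rightarrow> int \<Rightarrow> 'a::field) \<Rightarrow> (int \<Rightarrow> int \<Rightarrow> int \<Rightarrow> int \<Rightarrow> 'a) \<Rightarrow> int \<Rightarrow> int \<Rightarrow> nat \<Rightarrow> 'a" where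
  "Sf Y B j0 i 0 = 0"
| "Sf Y B j0 i (Suc k) = (Y i (j0 + 2*int k + 1) + Sf Y B j0 i k * B i (j0 + 2*int k) i (j0 + 2*int k + 1))
      / B i (j0 + 2*int k + 2) i (j0 + 2*int k + 1)"

lemma core:
  fixes Y :: "int \<Rightarrow> int \<Rightarrow> 'a::field" and A B :: "int \<Rightarrow> int \<Rightarrow> int \<Rightarrow> int \<Rightarrow> 'a" and n :: nat
  defines "N \<equiv> 2 * int n"
  assumes n: "n \<ge> 2"
  and c2: "(1::'a) + 1 = 0"
  and Yp: "\<And>i j. Y i j = Y (i mod N) (j mod N)"
  and Bp: "\<And>a b c d. B a b c d = B (a mod N) (b mod N) (c mod N) (d mod N)"
  and Bnz: "\<And>i j. even i \<Longrightarrow> odd j \<Longrightarrow> B i j (i+1) j \<noteq> 0 \<and> B i j (i-1) j \<noteq> 0 \<and> B i j i (j+1) \<noteq> 0 \<and> B i j i (j-1) \<noteq> 0"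
  and Anz: "\<And>i j. odd i \<Longrightarrow> even j \<Longrightarrow> A i j i (j+1) \<noteq> 0"
  and star: "\<And>i j. odd i \<Longrightarrow> even j \<Longrightarrow>
      A i j (i+1) j * Y (i+1) j + A i j (i-1) j * Y (i-1) j + A i j i (j+1) * Y i (j+1) + A i j i (j-1) * Y i (j-1) = 0"
  and ortho: "\<And>i j s t. odd i \<Longrightarrow> even j \<Longrightarrow> s = 1 \<or> s = -1 \<Longrightarrow> t = 1 \<or> t = -1 \<Longrightarrow>
      A i j (i+s) j * B (i+s) (j+t) (i+s) j + A i j i (j+t) * B (i+s) (j+t) i (j+t) = 0"
  and ia: "even ia" "\<And>j. even j \<Longrightarrow> Y ia j = 0"
  and ja: "odd ja" "\<And>i. odd i \<Longrightarrow> Y i ja = 0"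
  shows "\<exists>f. (\<forall>i j. f i j = f (i mod N) (j mod N)) \<and>
    (\<forall>i j. even i \<longrightarrow> even j \<longrightarrow> Y i j = f i (j-1) * B i (j-1) i j + f i (j+1) * B i (j+1) i j) \<and>
    (\<forall>i j. odd i \<longrightarrow> odd j \<longrightarrow> Y i j = f (i-1) j * B (i-1) j i j + f (i+1) j * B (i+1) j i j)"
proof -
  define S where "S = Sf Y B ja"
  have S0: "S i 0 = 0" for i by (simp add: S_def)
  have SS: "S i (Suc k) = (Y i (ja + 2*int k + 1) + S i k * B i (ja + 2*int k) i (ja + 2*int k + 1))
      / B i (ja + 2*int k + 2) i (ja + 2*int k + 1)" for i k by (simp add: S_def)
  have Npos: "N > 0" using n by (simp add: N_def)
  have Ycong: "Y a b = Y a' b'" if "a mod N = a' mod N" "b mod N = b' mod N" for a b a' b'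
    using Yp[of a b] Yp[of a' b'] that by simp
  have Bcong: "B a b c d = B a' b' c' d'" if "a mod N = a' mod N" "b mod N = b' mod N"
      "c mod N = c' mod N" "d mod N = d' mod N" for a b c d a' b' c' d'
    using Bp[of a b c d] Bp[of a' b' c' d'] that by simp
  have Smod: "S i k = S (i mod N) k" for i k
  proof (induction k)
    case 0 thus ?case by (simp add: S0)
  next
    case (Suc k)
    have y: "Y i x = Y (i mod N) x" for x by (rule Ycong) simp_all
    have b: "B i x i y = B (i mod N) x (i mod N) y" for x y by (rule Bcong) simp_all
    show ?case unfolding SS Suc[symmetric] y b ..
  qed
  have Si0: "S ia k = 0" for k
  proof (induction k)
    case 0 thus ?case by (simp add: S0)
  next
    case (Suc k)
    have "even (ja + 2*int k + 1)" using ja(1) by simp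
    thus ?case unfolding SS Suc using ia(2) by simp
  qed
  have Q: "Y i (ja + 2*int k) = S (i-1) k * B (i-1) (ja + 2*int k) i (ja + 2*int k)
             + S (i+1) k * B (i+1) (ja + 2*int k) i (ja + 2*int k)" if "odd i" for i k
    using that
  proof (induction k arbitrary: i)
    case 0 thus ?case using ja(2) by (simp add: S0)
  next
    case (Suc k)
    define J where "J = ja + 2*int k"
    have oi: "odd i" by fact
    have eJ: "even (J+1)" using ja(1) by (simp add: J_def)
    have IH: "Y i J = S (i-1) k * B (i-1) J i J + S (i+1) k * B (i+1) J i J"
      using Suc.IH[OF oi] by (simp add: J_def)
    have recL: "S (i-1) (Suc k) = (Y (i-1) (J+1) + S (i-1) k * B (i-1) J (i-1) (J+1)) / B (i-1) (J+2) (i-1) (J+1)"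
      by (simp add: SS J_def)
    have recR: "S (i+1) (Suc k) = (Y (i+1) (J+1) + S (i+1) k * B (i+1) J (i+1) (J+1)) / B (i+1) (J+2) (i+1) (J+1)"
      by (simp add: SS J_def)
    have st: "A i (J+1) (i+1) (J+1) * Y (i+1) (J+1) + A i (J+1) (i-1) (J+1) * Y (i-1) (J+1)
        + A i (J+1) i (J+2) * Y i (J+2) + A i (J+1) i J * Y i J = 0"
      using star[OF oi eJ] by (simp add: add.assoc)
    have o1: "A i (J+1) (i-1) (J+1) * B (i-1) J (i-1) (J+1) + A i (J+1) i J * B (i-1) J i J = 0"
      using ortho[OF oi eJ, of "-1" "-1"] by simp
    have o2: "A i (J+1) (i+1) (J+1) * B (i+1) J (i+1) (J+1) + A i (J+1) i J * B (i+1) J i J = 0"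
      using ortho[OF oi eJ, of "1" "-1"] by simp
    have o3: "A i (J+1) (i-1) (J+1) * B (i-1) (J+2) (i-1) (J+1) + A i (J+1) i (J+2) * B (i-1) (J+2) i (J+2) = 0"
      using ortho[OF oi eJ, of "-1" "1"] by (simp add: add.assoc)
    have o4: "A i (J+1) (i+1) (J+1) * B (i+1) (J+2) (i+1) (J+1) + A i (J+1) i (J+2) * B (i+1) (J+2) i (J+2) = 0"
      using ortho[OF oi eJ, of "1" "1"] by (simp add: add.assoc)
    have nzA: "A i (J+1) i (J+2) \<noteq> 0" using Anz[OF oi eJ] by (simp add: add.assoc)
    have oJ: "odd (J+2)" using ja(1) by (simp add: J_def)
    have jj: "J+2-1 = J+1" by simp
    have nzL: "B (i-1) (J+2) (i-1) (J+1) \<noteq> 0"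
      using Bnz[of "i-1" "J+2"] oi oJ unfolding jj by simp
    have nzR: "B (i+1) (J+2) (i+1) (J+1) \<noteq> 0"
      using Bnz[of "i+1" "J+2"] oi oJ unfolding jj by simp
    have "Y i (J+2) = S (i-1) (Suc k) * B (i-1) (J+2) i (J+2) + S (i+1) (Suc k) * B (i+1) (J+2) i (J+2)"
      by (rule alg_step[OF c2 nzA nzL nzR IH recL recR st o1 o2 o3 o4])
    moreover have "ja + 2*int (Suc k) = J+2" by (simp add: J_def)
    ultimately show ?case by (simp only:)
  qed
  have N2: "N = 2 * int n" by (simp add: N_def)
  have Sn: "S i n = 0" if "even i" for i
  proof -
    have step: "S (i'+1) n = 0" if "odd i'" "S (i'-1) n = 0" for i'
    proof -
      define J where "J = ja + 2 * int n"
      have oJ: "odd J" using ja(1) by (simp add: J_def)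
      have "Y i' J = Y i' ja" by (rule Ycong) (simp_all add: J_def N2)
      hence "Y i' J = 0" using ja(2)[OF that(1)] by simp
      with Q[OF that(1), of n] have "S (i'-1) n * B (i'-1) J i' J + S (i'+1) n * B (i'+1) J i' J = 0"
        by (simp add: J_def)
      hence "S (i'+1) n * B (i'+1) J i' J = 0" using that(2) by simp
      moreover have "B (i'+1) J i' J \<noteq> 0" using Bnz[of "i'+1" J] that(1) oJ by simp
      ultimately show ?thesis by simp
    qed
    have all: "S (ia + 2 * int t) n = 0" for t
    proof (induction t)
      case 0 thus ?case using Si0 by simp
    next
      case (Suc t)
      have "odd (ia + 2*int t + 1)" using ia(1) by simp
      from step[OF this] Suc have "S (ia + 2*int t + 1 + 1) n = 0" by simp
      thus ?case by (simp add: algebra_simps)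
    qed
    define t where "t = nat (((i - ia) mod N) div 2)"
    have "even (i - ia)" using that ia(1) by simp
    hence ev: "even ((i - ia) mod N)" using N2
      by (simp add: even_iff_mod_2_eq_zero mod_mod_cancel del: even_diff)
    have nn: "(i - ia) mod N \<ge> 0" using Npos by simp
    have "2 * int t = (i - ia) mod N" using ev nn by (simp add: t_def)
    hence "(ia + 2 * int t) mod N = i mod N" by (simp add: mod_add_right_eq)
    hence "S i n = S (ia + 2 * int t) n" using Smod[of i n] Smod[of "ia + 2*int t" n] by simp
    thus ?thesis using all by simp
  qed
  have Sper: "S i (k + n) = S i k" if "even i" for i k
  proof (induction k)
    case 0 thus ?case using Sn[OF that] S0 by simp
  next
    case (Suc k)
    have e0: "ja + 2 * int (k+n) = (ja + 2 * int k) + N" by (simp add: N2)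
    have e1: "ja + 2 * int (k+n) + 1 = (ja + 2 * int k + 1) + N" by (simp add: N2)
    have e2: "ja + 2 * int (k+n) + 2 = (ja + 2 * int k + 2) + N" by (simp add: N2)
    have y: "Y i (ja + 2 * int (k+n) + 1) = Y i (ja + 2 * int k + 1)" unfolding e1 by (rule Ycong) simp_all
    have b1: "B i (ja + 2 * int (k+n)) i (ja + 2 * int (k+n) + 1) = B i (ja + 2 * int k) i (ja + 2 * int k + 1)"
      unfolding e1 unfolding e0 by (rule Bcong) simp_all
    have b2: "B i (ja + 2 * int (k+n) + 2) i (ja + 2 * int (k+n) + 1) = B i (ja + 2 * int k + 2) i (ja + 2 * int k + 1)"
      unfolding e2 e1 by (rule Bcong) simp_all
    have "S i (Suc k + n) = S i (Suc (k + n))" by simp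
    also have "\<dots> = S i (Suc k)" unfolding SS y b1 b2 Suc ..
    finally show ?case .
  qed
  have Smodk: "S i k = S i (k mod n)" if "even i" for i k
  proof -
    have "S i (k' + n * m) = S i k'" for k' m
    proof (induction m)
      case 0 thus ?case by simp
    next
      case (Suc m)
      have "S i (k' + n * Suc m) = S i ((k' + n*m) + n)" by (simp add: algebra_simps)
      also have "\<dots> = S i (k' + n*m)" by (rule Sper[OF that])
      finally show ?case using Suc by simp
    qed
    from this[of "k mod n" "k div n"] show ?thesis by simp
  qed
  define f where "f i j = S i (nat (((j - ja) div 2) mod int n))" for i j
  have xx: "x + x = 0" for x :: 'a
  proof -
    have "x + x = (1+1) * x" by (simp add: algebra_simps)
    thus ?thesis using c2 by simp
  qed
  have fper: "f i j = f (i mod N) (j mod N)" for i j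
  proof -
    have "j mod N = j - N * (j div N)" by (simp add: minus_div_mult_eq_mod [symmetric])
    hence "(j mod N - ja) div 2 = (j - ja) div 2 + int n * (- (j div N))"
      by (simp add: N2 algebra_simps)
    hence "((j mod N - ja) div 2) mod int n = ((j - ja) div 2) mod int n" by (simp add: mod_eq_dvd_iff)
    hence "f (i mod N) (j mod N) = S (i mod N) (nat (((j - ja) div 2) mod int n))" unfolding f_def by simp
    also have "\<dots> = f i j" using Smod[of i] by (simp add: f_def)
    finally show ?thesis ..
  qed
  have kmod: "2 * (t mod int n) mod N = 2 * t mod N" for t
  proof -
    have "2 * (t mod int n) = (2*t) mod N" unfolding N2 by (rule mult_mod_right)
    thus ?thesis by simp
  qed
  have E1: "Y i j = f i (j-1) * B i (j-1) i j + f i (j+1) * B i (j+1) i j" if "even i" "even j" for i j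
  proof -
    define t where "t = (j - 1 - ja) div 2"
    have "even (j - 1 - ja)" using that(2) ja(1) by simp
    hence jt: "j - 1 = ja + 2 * t" unfolding t_def by simp
    define k where "k = nat (t mod int n)"
    have kk: "int k = t mod int n" using n by (simp add: k_def)
    have f1: "f i (j-1) = S i k" unfolding f_def k_def t_def by simp
    have "(j + 1 - ja) div 2 = t + 1" using jt by simp
    hence "f i (j+1) = S i (nat ((t+1) mod int n))" unfolding f_def by simp
    also have "nat ((t+1) mod int n) = Suc k mod n"
    proof -
      have "int (Suc k mod n) = (int k + 1) mod int n" by (simp add: zmod_int add.commute)
      also have "\<dots> = (t+1) mod int n" unfolding kk by (simp add: mod_add_left_eq)
      finally show ?thesis by simp
    qed
    also have "S i (Suc k mod n) = S i (Suc k)" using Smodk[OF that(1), of "Suc k"] by simp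
    finally have f2: "f i (j+1) = S i (Suc k)" .
    have m0: "(ja + 2 * int k) mod N = (j - 1) mod N"
    proof -
      have "(ja + 2 * int k) mod N = (ja + (2 * int k) mod N) mod N" by (simp add: mod_add_right_eq)
      also have "\<dots> = (ja + (2 * t) mod N) mod N" using kmod kk by simp
      also have "\<dots> = (ja + 2*t) mod N" by (simp add: mod_add_right_eq)
      finally show ?thesis using jt by simp
    qed
    have m1: "(ja + 2 * int k + 1) mod N = j mod N"
      using mod_add_cong[OF m0, of 1 1] by simp
    have m2: "(ja + 2 * int k + 2) mod N = (j + 1) mod N"
      using mod_add_cong[OF m0, of 2 2] by (simp add: ac_simps)
    have y: "Y i (ja + 2 * int k + 1) = Y i j" by (rule Ycong) (simp_all add: m1)
    have b1: "B i (ja + 2 * int k) i (ja + 2 * int k + 1) = B i (j-1) i j" by (rule Bcong) (simp_all add: m0 m1)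
    have b2: "B i (ja + 2 * int k + 2) i (ja + 2 * int k + 1) = B i (j+1) i j" by (rule Bcong) (simp_all add: m1 m2)
    have nz: "B i (j+1) i j \<noteq> 0" using Bnz[of i "j+1"] that by simp
    have "S i (Suc k) = (Y i j + S i k * B i (j-1) i j) / B i (j+1) i j" using SS[of i k] y b1 b2 by simp
    hence "S i (Suc k) * B i (j+1) i j = Y i j + S i k * B i (j-1) i j" using nz by simp
    moreover have "Y i j = (Y i j + S i k * B i (j-1) i j) + S i k * B i (j-1) i j"
      by (simp add: add.assoc xx)
    ultimately have "Y i j = S i k * B i (j-1) i j + S i (Suc k) * B i (j+1) i j" by (simp add: add.commute)
    thus ?thesis using f1 f2 by simp
  qed
  have E2: "Y i j = f (i-1) j * B (i-1) j i j + f (i+1) j * B (i+1) j i j" if "odd i" "odd j" for i j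
  proof -
    define t where "t = (j - ja) div 2"
    have "even (j - ja)" using that(2) ja(1) by simp
    hence jt: "j = ja + 2 * t" unfolding t_def by simp
    define k where "k = nat (t mod int n)"
    have kk: "int k = t mod int n" using n by (simp add: k_def)
    have f1: "f (i-1) j = S (i-1) k" "f (i+1) j = S (i+1) k" unfolding f_def k_def t_def by simp_all
    have m0: "(ja + 2 * int k) mod N = j mod N"
    proof -
      have "(ja + 2 * int k) mod N = (ja + (2 * int k) mod N) mod N" by (simp add: mod_add_right_eq)
      also have "\<dots> = (ja + (2 * t) mod N) mod N" using kmod kk by simp
      also have "\<dots> = (ja + 2*t) mod N" by (simp add: mod_add_right_eq)
      finally show ?thesis using jt by simp
    qed
    have y: "Y i (ja + 2 * int k) = Y i j" by (rule Ycong) (simp_all add: m0)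
    have b1: "B (i-1) (ja + 2 * int k) i (ja + 2 * int k) = B (i-1) j i j" by (rule Bcong) (simp_all add: m0)
    have b2: "B (i+1) (ja + 2 * int k) i (ja + 2 * int k) = B (i+1) j i j" by (rule Bcong) (simp_all add: m0)
    show ?thesis using Q[OF that(1), of k] y b1 b2 f1 by simp
  qed
  show ?thesis
    apply (rule exI[of _ f])
    using fper E1 E2 by blast
qed




locale tor =
  fixes n :: nat and HX HZ :: "nat \<times> nat \<Rightarrow> nat \<times> nat \<Rightarrow> 'a::field"
  assumes n2: "n \<ge> 2" and c2: "(1::'a) + 1 = 0"
    and labX: "is_labeling n (tor_CX n) HX" and labZ: "is_labeling n (tor_CZ n) HZ"
    and dualh: "dual_code n (code_ker n (tor_CZ n) HZ) \<subseteq> code_ker n (tor_CX n) HX"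
    and cyc: "\<And>vs cs. is_cycle n (tor_CX n) vs cs \<Longrightarrow> cycle_product HX vs cs = 1"
begin

abbreviation "CXc \<equiv> code_ker n (tor_CX n) HX"
abbreviation "CZc \<equiv> code_ker n (tor_CZ n) HZ"

lemma n1: "n \<ge> 1" using n2 by simp

lemma xx: "(x::'a) + x = 0"
proof -
  have "x + x = (1+1) * x" by (simp add: algebra_simps)
  thus ?thesis using c2 by simp
qed

lemma orthoN:
  assumes c: "c \<in> tor_CX n" and c': "c' \<in> tor_CZ n"
  shows "(\<Sum>v\<in>tor_V n. HX c v * HZ c' v) = 0"
proof -
  define r where "r v = (if v \<in> tor_V n then HZ c' v else 0)" for v
  have "r \<in> dual_code n CZc"
    unfolding dual_code_def vecs_def
  proof (intro CollectI conjI ballI allI impI)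
    fix v assume "v \<notin> tor_V n" thus "r v = 0" by (simp add: r_def)
  next
    fix x assume x: "x \<in> CZc"
    have "(\<Sum>v\<in>tor_V n. x v * r v) = (\<Sum>v\<in>tor_V n. HZ c' v * x v)"
      by (rule sum.cong) (simp_all add: r_def mult.commute)
    also have "\<dots> = 0" using x c' by (simp add: code_ker_def)
    finally show "(\<Sum>v\<in>tor_V n. x v * r v) = 0" .
  qed
  hence "r \<in> CXc" using dualh by blast
  hence "(\<Sum>v\<in>tor_V n. HX c v * r v) = 0" using c by (simp add: code_ker_def)
  moreover have "(\<Sum>v\<in>tor_V n. HX c v * r v) = (\<Sum>v\<in>tor_V n. HX c v * HZ c' v)"
    by (rule sum.cong) (simp_all add: r_def)
  ultimately show ?thesis by simp
qed

lemma notadj: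
  assumes "\<not> (2*int n) dvd (k - i)" "\<not> (2*int n) dvd (l - j)"
  shows "\<not> tor_adj n (pr n i j) (pr n k l)"
  using adj_dvd[OF n1] assms by blast

lemma ndv: "\<not> (2*int n) dvd 1" "\<not> (2*int n) dvd (-1)" "\<not> (2*int n) dvd 2" "\<not> (2*int n) dvd (-2)"
  using nd[OF n2] n2 by auto

lemma orthoI:
  assumes ij: "odd i" "even j" and s: "s = 1 \<or> s = -1" and t: "t = 1 \<or> t = -1"
  shows "HX (pr n i j) (pr n (i+s) j) * HZ (pr n (i+s) (j+t)) (pr n (i+s) j)
       + HX (pr n i j) (pr n i (j+t)) * HZ (pr n (i+s) (j+t)) (pr n i (j+t)) = 0"
proof -
  let ?c = "pr n i j" and ?c' = "pr n (i+s) (j+t)"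
  have c: "?c \<in> tor_CX n" using ij by (simp add: pr_CX[OF n1])
  have c': "?c' \<in> tor_CZ n" using ij s t by (auto simp: pr_CZ[OF n1])
  have zero: "HZ ?c' (pr n k l) = 0" if "even (k + l)" "\<not> (2*int n) dvd (k - (i+s))" "\<not> (2*int n) dvd (l - (j+t))" for k l
  proof -
    have "pr n k l \<in> tor_V n" using that(1) by (simp add: pr_V[OF n1])
    moreover have "\<not> tor_adj n ?c' (pr n k l)" using notadj that(2,3) by blast
    ultimately show ?thesis using labZ c' unfolding is_labeling_def by blast
  qed
  have z1: "HZ ?c' (pr n (i-s) j) = 0"
    apply (rule zero) using ij s t ndv by auto
  have z2: "HZ ?c' (pr n i (j-t)) = 0"
    apply (rule zero) using ij s t ndv by auto
  have "(\<Sum>v\<in>tor_V n. HX ?c v * HZ ?c' v) = 0" by (rule orthoN[OF c c'])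
  moreover have "(\<Sum>v\<in>tor_V n. HX ?c v * HZ ?c' v) =
     HX ?c (pr n (i+1) j) * HZ ?c' (pr n (i+1) j) + HX ?c (pr n (i-1) j) * HZ ?c' (pr n (i-1) j) +
     HX ?c (pr n i (j+1)) * HZ ?c' (pr n i (j+1)) + HX ?c (pr n i (j-1)) * HZ ?c' (pr n i (j-1))"
    by (rule sum_nbrs[OF n2 labX c]) (use ij in simp)
  ultimately show ?thesis using s t z1 z2 by (auto simp: algebra_simps)
qed

lemma orthoZ:
  assumes ij: "even i" "odd j" and s: "s = 1 \<or> s = -1" and t: "t = 1 \<or> t = -1"
  shows "HZ (pr n i j) (pr n (i+s) j) * HX (pr n (i+s) (j+t)) (pr n (i+s) j)
       + HZ (pr n i j) (pr n i (j+t)) * HX (pr n (i+s) (j+t)) (pr n i (j+t)) = 0"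
proof -
  have a: "odd (i+s)" "even (j+t)" using ij s t by auto
  have s': "-s = 1 \<or> -s = -1" and t': "-t = 1 \<or> -t = -1" using s t by auto
  have "HX (pr n (i+s) (j+t)) (pr n (i+s+ -s) (j+t)) * HZ (pr n (i+s+ -s) (j+t+ -t)) (pr n (i+s+ -s) (j+t))
       + HX (pr n (i+s) (j+t)) (pr n (i+s) (j+t+ -t)) * HZ (pr n (i+s+ -s) (j+t+ -t)) (pr n (i+s) (j+t+ -t)) = 0"
    by (rule orthoI[OF a s' t'])
  thus ?thesis by (simp add: algebra_simps)
qed

lemma starX:
  assumes x: "x \<in> CXc" and ij: "odd i" "even j"
  shows "HX (pr n i j) (pr n (i+1) j) * x (pr n (i+1) j) + HX (pr n i j) (pr n (i-1) j) * x (pr n (i-1) j) +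
     HX (pr n i j) (pr n i (j+1)) * x (pr n i (j+1)) + HX (pr n i j) (pr n i (j-1)) * x (pr n i (j-1)) = 0"
proof -
  have c: "pr n i j \<in> tor_CX n" using ij by (simp add: pr_CX[OF n1])
  have "(\<Sum>v\<in>tor_V n. HX (pr n i j) v * x v) = 0" using x c by (simp add: code_ker_def)
  moreover have "(\<Sum>v\<in>tor_V n. HX (pr n i j) v * x v) = HX (pr n i j) (pr n (i+1) j) * x (pr n (i+1) j) + HX (pr n i j) (pr n (i-1) j) * x (pr n (i-1) j) +
     HX (pr n i j) (pr n i (j+1)) * x (pr n i (j+1)) + HX (pr n i j) (pr n i (j-1)) * x (pr n i (j-1))"
    by (rule sum_nbrs[OF n2 labX c]) (use ij in simp)
  ultimately show ?thesis by simp
qed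

lemma starZ:
  assumes x: "x \<in> CZc" and ij: "even i" "odd j"
  shows "HZ (pr n i j) (pr n (i+1) j) * x (pr n (i+1) j) + HZ (pr n i j) (pr n (i-1) j) * x (pr n (i-1) j) +
     HZ (pr n i j) (pr n i (j+1)) * x (pr n i (j+1)) + HZ (pr n i j) (pr n i (j-1)) * x (pr n i (j-1)) = 0"
proof -
  have c: "pr n i j \<in> tor_CZ n" using ij by (simp add: pr_CZ[OF n1])
  have "(\<Sum>v\<in>tor_V n. HZ (pr n i j) v * x v) = 0" using x c by (simp add: code_ker_def)
  moreover have "(\<Sum>v\<in>tor_V n. HZ (pr n i j) v * x v) = HZ (pr n i j) (pr n (i+1) j) * x (pr n (i+1) j) + HZ (pr n i j) (pr n (i-1) j) * x (pr n (i-1) j) +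
     HZ (pr n i j) (pr n i (j+1)) * x (pr n i (j+1)) + HZ (pr n i j) (pr n i (j-1)) * x (pr n i (j-1))"
    by (rule sum_nbrs[OF n2 labZ c]) (use ij in simp)
  ultimately show ?thesis by simp
qed

lemma adj_any:
  assumes lab: "is_labeling n C H" and C: "C \<subseteq> {..<2*n} \<times> {..<2*n}" and c: "c \<in> C"
    and v: "even (i+j)" and nz: "H c (pr n i j) \<noteq> 0"
  shows "c = pr n (i+1) j \<or> c = pr n (i-1) j \<or> c = pr n i (j+1) \<or> c = pr n i (j-1)"
proof -
  obtain a b where ab: "c = (a,b)" by (cases c)
  have "a < 2*n" "b < 2*n" using C c ab by auto
  hence cp: "c = pr n (int a) (int b)" using ab pr_nat by metis
  have "pr n i j \<in> tor_V n" using v by (simp add: pr_V[OF n1])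
  hence "tor_adj n c (pr n i j)" using lab c nz unfolding is_labeling_def by blast
  thus ?thesis using adj_inv[OF n1] cp by metis
qed

lemma CX_sub: "tor_CX n \<subseteq> {..<2*n} \<times> {..<2*n}" by (auto simp: tor_CX_def)
lemma CZ_sub: "tor_CZ n \<subseteq> {..<2*n} \<times> {..<2*n}" by (auto simp: tor_CZ_def)

lemma onlyZ_ee:
  assumes "c \<in> tor_CZ n" "even i" "even j" "HZ c (pr n i j) \<noteq> 0"
  shows "c = pr n i (j-1) \<or> c = pr n i (j+1)"
proof -
  have "c = pr n (i+1) j \<or> c = pr n (i-1) j \<or> c = pr n i (j+1) \<or> c = pr n i (j-1)"
    using adj_any[OF labZ CZ_sub assms(1)] assms by simp
  moreover have "pr n (i+1) j \<notin> tor_CZ n" "pr n (i-1) j \<notin> tor_CZ n" using assms by (simp_all add: pr_CZ[OF n1])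
  ultimately show ?thesis using assms(1) by auto
qed

lemma onlyZ_oo:
  assumes "c \<in> tor_CZ n" "odd i" "odd j" "HZ c (pr n i j) \<noteq> 0"
  shows "c = pr n (i-1) j \<or> c = pr n (i+1) j"
proof -
  have "c = pr n (i+1) j \<or> c = pr n (i-1) j \<or> c = pr n i (j+1) \<or> c = pr n i (j-1)"
    using adj_any[OF labZ CZ_sub assms(1)] assms by simp
  moreover have "pr n i (j+1) \<notin> tor_CZ n" "pr n i (j-1) \<notin> tor_CZ n" using assms by (simp_all add: pr_CZ[OF n1])
  ultimately show ?thesis using assms(1) by auto
qed

lemma onlyX_ee:
  assumes "c \<in> tor_CX n" "even i" "even j" "HX c (pr n i j) \<noteq> 0"
  shows "c = pr n (i-1) j \<or> c = pr n (i+1) j"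
proof -
  have "c = pr n (i+1) j \<or> c = pr n (i-1) j \<or> c = pr n i (j+1) \<or> c = pr n i (j-1)"
    using adj_any[OF labX CX_sub assms(1)] assms by simp
  moreover have "pr n i (j+1) \<notin> tor_CX n" "pr n i (j-1) \<notin> tor_CX n" using assms by (simp_all add: pr_CX[OF n1])
  ultimately show ?thesis using assms(1) by auto
qed

lemma onlyX_oo:
  assumes "c \<in> tor_CX n" "odd i" "odd j" "HX c (pr n i j) \<noteq> 0"
  shows "c = pr n i (j-1) \<or> c = pr n i (j+1)"
proof -
  have "c = pr n (i+1) j \<or> c = pr n (i-1) j \<or> c = pr n i (j+1) \<or> c = pr n i (j-1)"
    using adj_any[OF labX CX_sub assms(1)] assms by simp
  moreover have "pr n (i+1) j \<notin> tor_CX n" "pr n (i-1) j \<notin> tor_CX n" using assms by (simp_all add: pr_CX[OF n1])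
  ultimately show ?thesis using assms(1) by auto
qed

lemma sum_two:
  assumes "finite C" "p \<in> C" "q \<in> C" "p \<noteq> q" "\<And>c. c \<in> C \<Longrightarrow> c \<noteq> p \<Longrightarrow> c \<noteq> q \<Longrightarrow> g c = 0"
  shows "sum g C = g p + g q"
proof -
  have "sum g C = sum g {p, q}"
    by (rule sum.mono_neutral_right) (use assms in auto)
  thus ?thesis using assms(4) by simp
qed

lemma lines_card: "p < 2 \<Longrightarrow> card {a. a < 2*n \<and> a mod 2 = p} = n"
proof -
  assume p: "p < 2"
  have "{a. a < 2*n \<and> a mod 2 = p} = (\<lambda>k. 2*k + p) ` {..<n}"
  proof (rule Set.set_eqI, rule iffI)
    fix a assume "a \<in> {a. a < 2*n \<and> a mod 2 = p}"
    hence "a = 2*(a div 2) + p" "a div 2 < n" by auto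
    thus "a \<in> (\<lambda>k. 2*k + p) ` {..<n}" by blast
  next
    fix a assume "a \<in> (\<lambda>k. 2*k + p) ` {..<n}"
    thus "a \<in> {a. a < 2*n \<and> a mod 2 = p}" using p by auto
  qed
  moreover have "inj_on (\<lambda>k. 2*k + p) {..<n}" by (auto simp: inj_on_def)
  ultimately show ?thesis by (simp add: card_image)
qed

lemma supp_fin: "finite {v \<in> tor_V n. x v \<noteq> 0}" using finite_V by simp

lemma cut_col:
  assumes w: "hweight n x < n" and p: "p < 2"
  shows "\<exists>a<2*n. a mod 2 = p \<and> (\<forall>b<2*n. b mod 2 = p \<longrightarrow> x (a,b) = 0)"
proof (rule ccontr)
  assume "\<not> ?thesis"
  hence "\<forall>a\<in>{a. a < 2*n \<and> a mod 2 = p}. \<exists>b. b < 2*n \<and> b mod 2 = p \<and> x (a,b) \<noteq> 0" by auto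
  then obtain g where g: "\<forall>a\<in>{a. a < 2*n \<and> a mod 2 = p}. g a < 2*n \<and> g a mod 2 = p \<and> x (a, g a) \<noteq> 0"
    by metis
  have "card {a. a < 2*n \<and> a mod 2 = p} \<le> card {v \<in> tor_V n. x v \<noteq> 0}"
  proof (rule card_inj_on_le[of "\<lambda>a. (a, g a)"])
    show "inj_on (\<lambda>a. (a, g a)) {a. a < 2*n \<and> a mod 2 = p}" by (auto simp: inj_on_def)
    show "(\<lambda>a. (a, g a)) ` {a. a < 2*n \<and> a mod 2 = p} \<subseteq> {v \<in> tor_V n. x v \<noteq> 0}"
    proof (rule image_subsetI)
      fix a assume a: "a \<in> {a. a < 2*n \<and> a mod 2 = p}"
      hence "a mod 2 = g a mod 2" using g by simp
      hence "even (a + g a)" by (metis even_add even_iff_mod_2_eq_zero)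
      thus "(a, g a) \<in> {v \<in> tor_V n. x v \<noteq> 0}" using a g by (simp add: tor_V_def)
    qed
    show "finite {v \<in> tor_V n. x v \<noteq> 0}" by (rule supp_fin)
  qed
  thus False using w lines_card[OF p] by (simp add: hweight_def)
qed

lemma cut_row:
  assumes w: "hweight n x < n" and p: "p < 2"
  shows "\<exists>b<2*n. b mod 2 = p \<and> (\<forall>a<2*n. a mod 2 = p \<longrightarrow> x (a,b) = 0)"
proof (rule ccontr)
  assume "\<not> ?thesis"
  hence "\<forall>b\<in>{a. a < 2*n \<and> a mod 2 = p}. \<exists>a. a < 2*n \<and> a mod 2 = p \<and> x (a,b) \<noteq> 0" by auto
  then obtain g where g: "\<forall>b\<in>{a. a < 2*n \<and> a mod 2 = p}. g b < 2*n \<and> g b mod 2 = p \<and> x (g b, b) \<noteq> 0"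
    by metis
  have "card {a. a < 2*n \<and> a mod 2 = p} \<le> card {v \<in> tor_V n. x v \<noteq> 0}"
  proof (rule card_inj_on_le[of "\<lambda>b. (g b, b)"])
    show "inj_on (\<lambda>b. (g b, b)) {a. a < 2*n \<and> a mod 2 = p}" by (auto simp: inj_on_def)
    show "(\<lambda>b. (g b, b)) ` {a. a < 2*n \<and> a mod 2 = p} \<subseteq> {v \<in> tor_V n. x v \<noteq> 0}"
    proof (rule image_subsetI)
      fix a assume a: "a \<in> {a. a < 2*n \<and> a mod 2 = p}"
      hence "a mod 2 = g a mod 2" using g by simp
      hence "even (g a + a)" by (metis even_add even_iff_mod_2_eq_zero)
      thus "(g a, a) \<in> {v \<in> tor_V n. x v \<noteq> 0}" using a g by (simp add: tor_V_def)
    qed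
    show "finite {v \<in> tor_V n. x v \<noteq> 0}" by (rule supp_fin)
  qed
  thus False using w lines_card[OF p] by (simp add: hweight_def)
qed

end



context tor begin

lemma pr_mod [simp]: "pr n (i mod (2*int n)) (j mod (2*int n)) = pr n i j"
  by (simp add: pr_def)

lemma int_nat_mod: "int (nat (x mod (2*int n))) = x mod (2*int n)"
  using n1 by simp

lemma dual_of_rep:
  assumes x: "x \<in> vecs n" and C: "finite C"
    and rep: "\<And>v. v \<in> tor_V n \<Longrightarrow> x v = (\<Sum>c\<in>C. F c * H c v)"
    and ker: "\<And>z c. z \<in> S \<Longrightarrow> c \<in> C \<Longrightarrow> (\<Sum>v\<in>tor_V n. H c v * z v) = 0"
  shows "x \<in> dual_code n S"
  unfolding dual_code_def
proof (intro CollectI conjI ballI)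
  show "x \<in> vecs n" by fact
next
  fix z assume z: "z \<in> S"
  have "(\<Sum>v\<in>tor_V n. z v * x v) = (\<Sum>v\<in>tor_V n. \<Sum>c\<in>C. F c * (H c v * z v))"
    by (rule sum.cong) (simp_all add: rep sum_distrib_left sum_distrib_right algebra_simps)
  also have "\<dots> = (\<Sum>c\<in>C. F c * (\<Sum>v\<in>tor_V n. H c v * z v))"
    by (simp add: sum.swap[of _ C] sum_distrib_left)
  also have "\<dots> = 0" using ker[OF z] by simp
  finally show "(\<Sum>v\<in>tor_V n. z v * x v) = 0" .
qed

lemma lowX:
  assumes x: "x \<in> CXc" and nd: "x \<notin> dual_code n CZc"
  shows "n \<le> hweight n x"
proof (rule ccontr)
  assume "\<not> n \<le> hweight n x"
  hence w: "hweight n x < n" by simp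
  obtain a0 where a0: "a0 < 2*n" "a0 mod 2 = 0" "\<forall>b<2*n. b mod 2 = 0 \<longrightarrow> x (a0,b) = 0"
    using cut_col[OF w, of 0] by auto
  obtain b0 where b0: "b0 < 2*n" "b0 mod 2 = 1" "\<forall>a<2*n. a mod 2 = 1 \<longrightarrow> x (a,b0) = 0"
    using cut_row[OF w, of 1] by auto
  define Y where "Y i j = x (pr n i j)" for i j
  define A where "A i j k l = HX (pr n i j) (pr n k l)" for i j k l
  define B where "B i j k l = HZ (pr n i j) (pr n k l)" for i j k l
  have "\<exists>f. (\<forall>i j. f i j = f (i mod (2*int n)) (j mod (2*int n))) \<and>
    (\<forall>i j. even i \<longrightarrow> even j \<longrightarrow> Y i j = f i (j-1) * B i (j-1) i j + f i (j+1) * B i (j+1) i j) \<and>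
    (\<forall>i j. odd i \<longrightarrow> odd j \<longrightarrow> Y i j = f (i-1) j * B (i-1) j i j + f (i+1) j * B (i+1) j i j)"
  proof (rule core[where A=A and ia="int a0" and ja="int b0"])
    show "n \<ge> 2" by (rule n2)
    show "(1::'a) + 1 = 0" by (rule c2)
    show "Y i j = Y (i mod (2*int n)) (j mod (2*int n))" for i j by (simp add: Y_def)
    show "B a b c d = B (a mod (2*int n)) (b mod (2*int n)) (c mod (2*int n)) (d mod (2*int n))" for a b c d
      by (simp add: B_def)
    show "B i j (i+1) j \<noteq> 0 \<and> B i j (i-1) j \<noteq> 0 \<and> B i j i (j+1) \<noteq> 0 \<and> B i j i (j-1) \<noteq> 0"
      if "even i" "odd j" for i j
      unfolding B_def by (rule lab_nz[OF n2 labZ]) (use that in \<open>simp_all add: pr_CZ[OF n1]\<close>)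
    show "A i j i (j+1) \<noteq> 0" if "odd i" "even j" for i j
      using lab_nz[OF n2 labX, of i j] that unfolding A_def by (simp add: pr_CX[OF n1])
    show "A i j (i+1) j * Y (i+1) j + A i j (i-1) j * Y (i-1) j + A i j i (j+1) * Y i (j+1) + A i j i (j-1) * Y i (j-1) = 0"
      if "odd i" "even j" for i j
      unfolding A_def Y_def by (rule starX[OF x that])
    show "A i j (i+s) j * B (i+s) (j+t) (i+s) j + A i j i (j+t) * B (i+s) (j+t) i (j+t) = 0"
      if "odd i" "even j" "s = 1 \<or> s = -1" "t = 1 \<or> t = -1" for i j s t
      unfolding A_def B_def by (rule orthoI[OF that])
    show "even (int a0)" using a0 by presburger
    show "Y (int a0) j = 0" if "even j" for j
    proof -
      have "nat (j mod (2*int n)) mod 2 = 0" using that even_nat_mod[OF n1, of j] by presburger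
      moreover have "nat (j mod (2*int n)) < 2*n" by (rule nat_mod_lt[OF n1])
      ultimately show ?thesis using a0 by (simp add: Y_def pr_def zmod_int[symmetric])
    qed
    show "odd (int b0)" using b0 by presburger
    show "Y i (int b0) = 0" if "odd i" for i
    proof -
      have "nat (i mod (2*int n)) mod 2 = 1" using that even_nat_mod[OF n1, of i] by presburger
      moreover have "nat (i mod (2*int n)) < 2*n" by (rule nat_mod_lt[OF n1])
      ultimately show ?thesis using b0 by (simp add: Y_def pr_def zmod_int[symmetric])
    qed
  qed
  then obtain f where fall: "(\<forall>i j. f i j = f (i mod (2*int n)) (j mod (2*int n))) \<and>
    (\<forall>i j. even i \<longrightarrow> even j \<longrightarrow> Y i j = f i (j-1) * B i (j-1) i j + f i (j+1) * B i (j+1) i j) \<and>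
    (\<forall>i j. odd i \<longrightarrow> odd j \<longrightarrow> Y i j = f (i-1) j * B (i-1) j i j + f (i+1) j * B (i+1) j i j)"
    by (elim exE) (rule that)
  note fper = fall[THEN conjunct1, rule_format]
  note E1 = fall[THEN conjunct2, THEN conjunct1, rule_format]
  note E2 = fall[THEN conjunct2, THEN conjunct2, rule_format]
  define F where "F c = f (int (fst c)) (int (snd c))" for c
  have Fpr: "F (pr n i j) = f i j" for i j
  proof -
    have "F (pr n i j) = f (i mod (2*int n)) (j mod (2*int n))"
      unfolding F_def pr_def by (simp only: fst_conv snd_conv int_nat_mod)
    thus ?thesis using fper[of i j] by simp
  qed
  have rep: "x v = (\<Sum>c\<in>tor_CZ n. F c * HZ c v)" if v: "v \<in> tor_V n" for v
  proof -
    obtain a b where ab: "v = (a,b)" by (cases v)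
    have ab2: "a < 2*n" "b < 2*n" "even (a+b)" using v ab by (auto simp: tor_V_def)
    define i where "i = int a"
    define j where "j = int b"
    have vp: "v = pr n i j" using ab ab2 pr_nat i_def j_def by metis
    have ij: "even (i + j)" using ab2 by (simp add: i_def j_def)
    show ?thesis
    proof (cases "even i")
      case True
      hence ej: "even j" using ij by simp
      have "(\<Sum>c\<in>tor_CZ n. F c * HZ c v) = F (pr n i (j-1)) * HZ (pr n i (j-1)) v + F (pr n i (j+1)) * HZ (pr n i (j+1)) v"
      proof (rule sum_two[OF finite_CZ])
        show "pr n i (j-1) \<in> tor_CZ n" "pr n i (j+1) \<in> tor_CZ n" using True ej by (simp_all add: pr_CZ[OF n1])
        show "pr n i (j-1) \<noteq> pr n i (j+1)" using nbrs_distinct[OF n2, of i j] by metis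
        show "F c * HZ c v = 0" if "c \<in> tor_CZ n" "c \<noteq> pr n i (j-1)" "c \<noteq> pr n i (j+1)" for c
          using onlyZ_ee[OF that(1) True ej] that vp by auto
      qed
      also have "\<dots> = Y i j" using E1[OF True ej] by (simp add: Fpr B_def vp)
      finally show ?thesis by (simp add: Y_def vp)
    next
      case False
      hence oj: "odd j" using ij by simp
      have "(\<Sum>c\<in>tor_CZ n. F c * HZ c v) = F (pr n (i-1) j) * HZ (pr n (i-1) j) v + F (pr n (i+1) j) * HZ (pr n (i+1) j) v"
      proof (rule sum_two[OF finite_CZ])
        show "pr n (i-1) j \<in> tor_CZ n" "pr n (i+1) j \<in> tor_CZ n" using False oj by (simp_all add: pr_CZ[OF n1])
        show "pr n (i-1) j \<noteq> pr n (i+1) j" using nbrs_distinct[OF n2, of i j] by metis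
        show "F c * HZ c v = 0" if "c \<in> tor_CZ n" "c \<noteq> pr n (i-1) j" "c \<noteq> pr n (i+1) j" for c
          using onlyZ_oo[OF that(1) False oj] that vp by auto
      qed
      also have "\<dots> = Y i j" using E2[OF False oj] by (simp add: Fpr B_def vp)
      finally show ?thesis by (simp add: Y_def vp)
    qed
  qed
  have "x \<in> dual_code n CZc"
  proof (rule dual_of_rep[OF _ finite_CZ rep])
    show "x \<in> vecs n" using x by (simp add: code_ker_def)
    show "(\<Sum>v\<in>tor_V n. HZ c v * z v) = 0" if "z \<in> CZc" "c \<in> tor_CZ n" for z c
      using that by (simp add: code_ker_def)
  qed
  thus False using nd by simp
qed

lemma lowZ:
  assumes x: "x \<in> CZc" and nd: "x \<notin> dual_code n CXc"
  shows "n \<le> hweight n x"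
proof (rule ccontr)
  assume "\<not> n \<le> hweight n x"
  hence w: "hweight n x < n" by simp
  obtain a0 where a0: "a0 < 2*n" "a0 mod 2 = 1" "\<forall>b<2*n. b mod 2 = 1 \<longrightarrow> x (a0,b) = 0"
    using cut_col[OF w, of 1] by auto
  obtain b0 where b0: "b0 < 2*n" "b0 mod 2 = 0" "\<forall>a<2*n. a mod 2 = 0 \<longrightarrow> x (a,b0) = 0"
    using cut_row[OF w, of 0] by auto
  define Y where "Y i j = x (pr n (i-1) (j-1))" for i j
  define A where "A i j k l = HZ (pr n (i-1) (j-1)) (pr n (k-1) (l-1))" for i j k l
  define B where "B i j k l = HX (pr n (i-1) (j-1)) (pr n (k-1) (l-1))" for i j k l
  have Nm: "(z - 1) mod (2*int n) = (z mod (2*int n) - 1) mod (2*int n)" for z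
    by (simp add: mod_diff_left_eq)
  have prm: "pr n (i mod (2*int n) - 1) (j mod (2*int n) - 1) = pr n (i-1) (j-1)" for i j
    by (simp add: pr_def Nm[symmetric])
  have "\<exists>f. (\<forall>i j. f i j = f (i mod (2*int n)) (j mod (2*int n))) \<and>
    (\<forall>i j. even i \<longrightarrow> even j \<longrightarrow> Y i j = f i (j-1) * B i (j-1) i j + f i (j+1) * B i (j+1) i j) \<and>
    (\<forall>i j. odd i \<longrightarrow> odd j \<longrightarrow> Y i j = f (i-1) j * B (i-1) j i j + f (i+1) j * B (i+1) j i j)"
  proof (rule core[where A=A and ia="int a0 + 1" and ja="int b0 + 1"])
    show "n \<ge> 2" by (rule n2)
    show "(1::'a) + 1 = 0" by (rule c2)
    show "Y i j = Y (i mod (2*int n)) (j mod (2*int n))" for i j by (simp add: Y_def prm)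
    show "B a b c d = B (a mod (2*int n)) (b mod (2*int n)) (c mod (2*int n)) (d mod (2*int n))" for a b c d
      by (simp add: B_def prm)
    show "B i j (i+1) j \<noteq> 0 \<and> B i j (i-1) j \<noteq> 0 \<and> B i j i (j+1) \<noteq> 0 \<and> B i j i (j-1) \<noteq> 0"
      if "even i" "odd j" for i j
    proof -
      have "HX (pr n (i-1) (j-1)) (pr n (i-1+1) (j-1)) \<noteq> 0 \<and> HX (pr n (i-1) (j-1)) (pr n (i-1-1) (j-1)) \<noteq> 0 \<and>
         HX (pr n (i-1) (j-1)) (pr n (i-1) (j-1+1)) \<noteq> 0 \<and> HX (pr n (i-1) (j-1)) (pr n (i-1) (j-1-1)) \<noteq> 0"
        by (rule lab_nz[OF n2 labX]) (use that in \<open>simp_all add: pr_CX[OF n1]\<close>)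
      thus ?thesis unfolding B_def by (simp add: algebra_simps)
    qed
    show "A i j i (j+1) \<noteq> 0" if "odd i" "even j" for i j
    proof -
      have "HZ (pr n (i-1) (j-1)) (pr n (i-1) (j-1+1)) \<noteq> 0"
        using lab_nz[OF n2 labZ, of "i-1" "j-1"] that by (simp add: pr_CZ[OF n1])
      thus ?thesis unfolding A_def by simp
    qed
    show "A i j (i+1) j * Y (i+1) j + A i j (i-1) j * Y (i-1) j + A i j i (j+1) * Y i (j+1) + A i j i (j-1) * Y i (j-1) = 0"
      if "odd i" "even j" for i j
    proof -
      have "even (i-1)" "odd (j-1)" using that by simp_all
      from starZ[OF x this] show ?thesis unfolding A_def Y_def by (simp add: algebra_simps)
    qed
    show "A i j (i+s) j * B (i+s) (j+t) (i+s) j + A i j i (j+t) * B (i+s) (j+t) i (j+t) = 0"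
      if "odd i" "even j" "s = 1 \<or> s = -1" "t = 1 \<or> t = -1" for i j s t
    proof -
      have "even (i-1)" "odd (j-1)" using that by simp_all
      from orthoZ[OF this that(3,4)] show ?thesis unfolding A_def B_def by (simp add: algebra_simps)
    qed
    show "even (int a0 + 1)" using a0 by presburger
    show "Y (int a0 + 1) j = 0" if "even j" for j
    proof -
      have "odd (j-1)" using that by simp
      hence "odd (nat ((j-1) mod (2*int n)))" using even_nat_mod[OF n1, of "j-1"] by simp
      hence "nat ((j-1) mod (2*int n)) mod 2 = 1" by (simp add: odd_iff_mod_2_eq_one)
      moreover have "nat ((j-1) mod (2*int n)) < 2*n" by (rule nat_mod_lt[OF n1])
      ultimately show ?thesis using a0 by (simp add: Y_def pr_def zmod_int[symmetric])
    qed
    show "odd (int b0 + 1)" using b0 by presburger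
    show "Y i (int b0 + 1) = 0" if "odd i" for i
    proof -
      have "even (i-1)" using that by simp
      hence "even (nat ((i-1) mod (2*int n)))" using even_nat_mod[OF n1, of "i-1"] by simp
      hence "nat ((i-1) mod (2*int n)) mod 2 = 0" by (simp add: even_iff_mod_2_eq_zero)
      moreover have "nat ((i-1) mod (2*int n)) < 2*n" by (rule nat_mod_lt[OF n1])
      ultimately show ?thesis using b0 by (simp add: Y_def pr_def zmod_int[symmetric])
    qed
  qed
  then obtain f where fall: "(\<forall>i j. f i j = f (i mod (2*int n)) (j mod (2*int n))) \<and>
    (\<forall>i j. even i \<longrightarrow> even j \<longrightarrow> Y i j = f i (j-1) * B i (j-1) i j + f i (j+1) * B i (j+1) i j) \<and>
    (\<forall>i j. odd i \<longrightarrow> odd j \<longrightarrow> Y i j = f (i-1) j * B (i-1) j i j + f (i+1) j * B (i+1) j i j)"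
    by (elim exE) (rule that)
  note fper = fall[THEN conjunct1, rule_format]
  note E1 = fall[THEN conjunct2, THEN conjunct1, rule_format]
  note E2 = fall[THEN conjunct2, THEN conjunct2, rule_format]
  define F where "F c = f (int (fst c) + 1) (int (snd c) + 1)" for c
  have Fpr: "F (pr n i j) = f (i+1) (j+1)" for i j
  proof -
    have "F (pr n i j) = f (i mod (2*int n) + 1) (j mod (2*int n) + 1)"
      unfolding F_def pr_def by (simp only: fst_conv snd_conv int_nat_mod)
    also have "\<dots> = f ((i mod (2*int n) + 1) mod (2*int n)) ((j mod (2*int n) + 1) mod (2*int n))" by (rule fper)
    also have "\<dots> = f ((i + 1) mod (2*int n)) ((j + 1) mod (2*int n))" by (simp add: mod_add_left_eq)
    also have "\<dots> = f (i+1) (j+1)" by (rule fper[symmetric])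
    finally show ?thesis .
  qed
  have rep: "x v = (\<Sum>c\<in>tor_CX n. F c * HX c v)" if v: "v \<in> tor_V n" for v
  proof -
    obtain a b where ab: "v = (a,b)" by (cases v)
    have ab2: "a < 2*n" "b < 2*n" "even (a+b)" using v ab by (auto simp: tor_V_def)
    define i where "i = int a"
    define j where "j = int b"
    have vp: "v = pr n i j" using ab ab2 pr_nat i_def j_def by metis
    have ij: "even (i + j)" using ab2 by (simp add: i_def j_def)
    have Yv: "x v = Y (i+1) (j+1)" by (simp add: Y_def vp)
    show ?thesis
    proof (cases "even i")
      case True
      hence ej: "even j" using ij by simp
      have "(\<Sum>c\<in>tor_CX n. F c * HX c v) = F (pr n (i-1) j) * HX (pr n (i-1) j) v + F (pr n (i+1) j) * HX (pr n (i+1) j) v"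
      proof (rule sum_two[OF finite_CX])
        show "pr n (i-1) j \<in> tor_CX n" "pr n (i+1) j \<in> tor_CX n" using True ej by (simp_all add: pr_CX[OF n1])
        show "pr n (i-1) j \<noteq> pr n (i+1) j" using nbrs_distinct[OF n2, of i j] by metis
        show "F c * HX c v = 0" if "c \<in> tor_CX n" "c \<noteq> pr n (i-1) j" "c \<noteq> pr n (i+1) j" for c
          using onlyX_ee[OF that(1) True ej] that vp by auto
      qed
      also have "\<dots> = Y (i+1) (j+1)"
      proof -
        have "odd (i+1)" "odd (j+1)" using True ej by simp_all
        from E2[OF this] show ?thesis by (simp add: Fpr B_def vp ac_simps)
      qed
      finally show ?thesis using Yv by simp
    next
      case False
      hence oj: "odd j" using ij by simp
      have "(\<Sum>c\<in>tor_CX n. F c * HX c v) = F (pr n i (j-1)) * HX (pr n i (j-1)) v + F (pr n i (j+1)) * HX (pr n i (j+1)) v"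
      proof (rule sum_two[OF finite_CX])
        show "pr n i (j-1) \<in> tor_CX n" "pr n i (j+1) \<in> tor_CX n" using False oj by (simp_all add: pr_CX[OF n1])
        show "pr n i (j-1) \<noteq> pr n i (j+1)" using nbrs_distinct[OF n2, of i j] by metis
        show "F c * HX c v = 0" if "c \<in> tor_CX n" "c \<noteq> pr n i (j-1)" "c \<noteq> pr n i (j+1)" for c
          using onlyX_oo[OF that(1) False oj] that vp by auto
      qed
      also have "\<dots> = Y (i+1) (j+1)"
      proof -
        have "even (i+1)" "even (j+1)" using False oj by simp_all
        from E1[OF this] show ?thesis by (simp add: Fpr B_def vp ac_simps)
      qed
      finally show ?thesis using Yv by simp
    qed
  qed
  have "x \<in> dual_code n CXc"
  proof (rule dual_of_rep[OF _ finite_CX rep])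
    show "x \<in> vecs n" using x by (simp add: code_ker_def)
    show "(\<Sum>v\<in>tor_V n. HX c v * z v) = 0" if "z \<in> CXc" "c \<in> tor_CX n" for z c
      using that by (simp add: code_ker_def)
  qed
  thus False using nd by simp
qed

end



lemma line1d:
  fixes \<alpha> \<beta> :: "int \<Rightarrow> 'a::field" and n :: nat
  assumes n: "n \<ge> 1"
    and nz: "\<And>k. \<alpha> k \<noteq> 0" "\<And>k. \<beta> k \<noteq> 0"
    and pa: "\<And>k. \<alpha> k = \<alpha> (k mod int n)" and pb: "\<And>k. \<beta> k = \<beta> (k mod int n)"
    and prod1: "(\<Prod>t<n. \<beta> (int t) * inverse (\<alpha> (int t))) = 1"
  shows "\<exists>u. (\<forall>k. u k \<noteq> 0) \<and> (\<forall>k. u k = u (k mod int n)) \<and> (\<forall>k. \<alpha> k * u k = \<beta> k * u (k+1))"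
proof -
  define u0 where "u0 m = (\<Prod>t<m. \<alpha> (int t) / \<beta> (int t))" for m
  define u where "u k = u0 (nat (k mod int n))" for k
  have u0nz: "u0 m \<noteq> 0" for m using nz by (simp add: u0_def)
  have u0S: "u0 (Suc m) = u0 m * (\<alpha> (int m) / \<beta> (int m))" for m by (simp add: u0_def)
  have full: "u0 n = 1"
  proof -
    have "(\<Prod>t<n. \<alpha> (int t) / \<beta> (int t)) = (\<Prod>t<n. inverse (\<beta> (int t) * inverse (\<alpha> (int t))))"
      by (rule prod.cong) (simp_all add: field_simps)
    also have "\<dots> = inverse (\<Prod>t<n. \<beta> (int t) * inverse (\<alpha> (int t)))"
      using prod_inversef[of "\<lambda>t. \<beta> (int t) * inverse (\<alpha> (int t))" "{..<n}"] by (simp add: comp_def)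
    also have "\<dots> = 1" using prod1 by simp
    finally show ?thesis by (simp add: u0_def)
  qed
  show ?thesis
  proof (intro exI[of _ u] conjI allI)
    fix k show "u k \<noteq> 0" by (simp add: u_def u0nz)
  next
    fix k show "u k = u (k mod int n)" by (simp add: u_def)
  next
    fix k
    define m where "m = nat (k mod int n)"
    have mk: "int m = k mod int n" using n by (simp add: m_def)
    have mn: "m < n" using n by (simp add: m_def nat_less_iff)
    have am: "\<alpha> k = \<alpha> (int m)" "\<beta> k = \<beta> (int m)" using pa[of k] pb[of k] mk by simp_all
    have uk: "u k = u0 m" by (simp add: u_def m_def)
    show "\<alpha> k * u k = \<beta> k * u (k+1)"
    proof (cases "Suc m < n")
      case True
      have "(k+1) mod int n = int m + 1"
      proof -
        have "(k+1) mod int n = (int m + 1) mod int n" using mk by (simp add: mod_add_left_eq)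
        thus ?thesis using True by simp
      qed
      hence "u (k+1) = u0 (nat (int m + 1))" by (simp add: u_def)
      also have "nat (int m + 1) = Suc m" by simp
      finally have "u (k+1) = u0 (Suc m)" .
      thus ?thesis using uk am u0S[of m] nz by (simp add: field_simps)
    next
      case False
      hence mn1: "Suc m = n" using mn by simp
      have "(k+1) mod int n = 0"
      proof -
        have "(k+1) mod int n = (int m + 1) mod int n" using mk by (simp add: mod_add_left_eq)
        also have "int m + 1 = int n" using mn1 by simp
        finally show ?thesis by simp
      qed
      hence "u (k+1) = 1" by (simp add: u_def u0_def)
      moreover have "u0 m * (\<alpha> (int m) / \<beta> (int m)) = 1" using full u0S[of m] mn1 by simp
      ultimately show ?thesis using uk am nz by (simp add: field_simps)
    qed
  qed
qed

context tor begin

lemma line_from_cycle: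
  fixes Cf Vf :: "int \<Rightarrow> nat \<times> nat"
  assumes pC: "\<And>k. Cf k = Cf (k mod int n)" and pV: "\<And>k. Vf k = Vf (k mod int n)"
    and iC: "\<And>a b. Cf a = Cf b \<Longrightarrow> a mod int n = b mod int n"
    and iV: "\<And>a b. Vf a = Vf b \<Longrightarrow> a mod int n = b mod int n"
    and inV: "\<And>k. Vf k \<in> tor_V n" and inC: "\<And>k. Cf k \<in> tor_CX n"
    and adj: "\<And>k. tor_adj n (Cf (k+1)) (Vf k) \<and> tor_adj n (Cf (k+1)) (Vf (k+1))"
  shows "\<exists>t. (\<forall>k. t k \<noteq> 0) \<and> (\<forall>k. t k = t (k mod int n)) \<and>
     (\<forall>k. HX (Cf (k+1)) (Vf k) * t k = HX (Cf (k+1)) (Vf (k+1)) * t (k+1))"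
proof -
  define \<alpha> where "\<alpha> k = HX (Cf (k+1)) (Vf k)" for k
  define \<beta> where "\<beta> k = HX (Cf (k+1)) (Vf (k+1))" for k
  have nzH: "HX c v \<noteq> 0" if "c \<in> tor_CX n" "v \<in> tor_V n" "tor_adj n c v" for c v
    using labX that unfolding is_labeling_def by blast
  have pmod: "(k mod int n + 1) mod int n = (k + 1) mod int n" for k by (simp add: mod_add_left_eq)
  have pa: "\<alpha> k = \<alpha> (k mod int n)" for k
    unfolding \<alpha>_def using pC[of "k+1"] pC[of "k mod int n + 1"] pV[of k] pmod[of k] by simp
  have pb: "\<beta> k = \<beta> (k mod int n)" for k
    unfolding \<beta>_def using pC[of "k+1"] pC[of "k mod int n + 1"] pV[of "k+1"] pV[of "k mod int n + 1"] pmod[of k] by simp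
  define vs where "vs = map (\<lambda>t. Vf (int t)) [0..<n]"
  define cs where "cs = map (\<lambda>t. Cf (int t + 1)) [0..<n]"
  have lens: "length vs = n" "length cs = n" by (simp_all add: vs_def cs_def)
  have vsn: "vs ! (Suc t mod n) = Vf (int t + 1)" if "t < n" for t
  proof -
    have "Suc t mod n < n" using that by simp
    hence "vs ! (Suc t mod n) = Vf (int (Suc t mod n))" by (simp add: vs_def)
    also have "\<dots> = Vf (int t + 1)" using pV[of "int t + 1"] by (simp add: zmod_int ac_simps)
    finally show ?thesis .
  qed
  have vsm: "Vf (int (Suc t mod n)) = Vf (int t + 1)" for t
    using pV[of "int t + 1"] by (simp add: zmod_int ac_simps)
  have vst: "vs ! t = Vf (int t)" if "t < n" for t using that by (simp add: vs_def)
  have cyc1: "is_cycle n (tor_CX n) vs cs"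
    unfolding is_cycle_def
  proof (intro conjI allI impI)
    show "length vs = length cs" using lens by simp
    show "2 \<le> length vs" using lens n2 by simp
    show "distinct vs" unfolding vs_def distinct_map
    proof
      show "inj_on (\<lambda>t. Vf (int t)) (set [0..<n])"
      proof (rule inj_onI)
        fix a b assume ab: "a \<in> set [0..<n]" "b \<in> set [0..<n]" "Vf (int a) = Vf (int b)"
        have "int a mod int n = int b mod int n" by (rule iV[OF ab(3)])
        moreover have "a < n" "b < n" using ab by auto
        ultimately have "int (a mod n) = int (b mod n)" "a < n" "b < n" by (simp_all add: zmod_int)
        thus "a = b" by simp
      qed
    qed simp
    show "distinct cs" unfolding cs_def distinct_map
    proof
      show "inj_on (\<lambda>t. Cf (int t + 1)) (set [0..<n])"
      proof (rule inj_onI)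
        fix a b assume ab: "a \<in> set [0..<n]" "b \<in> set [0..<n]" "Cf (int a + 1) = Cf (int b + 1)"
        hence "(int a + 1) mod int n = (int b + 1) mod int n" using iC by blast
        hence "int n dvd (int a - int b)" by (simp add: mod_eq_dvd_iff)
        moreover have "\<bar>int a - int b\<bar> < int n" using ab by auto
        ultimately have "int a - int b = 0"
        proof -
          assume d: "int n dvd (int a - int b)" and l: "\<bar>int a - int b\<bar> < int n"
          show ?thesis
          proof (rule ccontr)
            assume "int a - int b \<noteq> 0"
            from dvd_imp_le_int[OF this d] l show False by simp
          qed
        qed
        thus "a = b" by simp
      qed
    qed simp
    show "set vs \<subseteq> tor_V n" using inV by (auto simp: vs_def)
    show "set cs \<subseteq> tor_CX n" using inC by (auto simp: cs_def)
    fix t assume "t < length vs"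
    hence t: "t < n" using lens by simp
    show "tor_adj n (cs ! t) (vs ! t)" using adj[of "int t"] t by (simp add: cs_def vs_def)
    have "vs ! ((t + 1) mod length vs) = Vf (int t + 1)" using vsn[OF t] lens by simp
    thus "tor_adj n (cs ! t) (vs ! ((t + 1) mod length vs))"
      using adj[of "int t"] t by (simp add: cs_def)
  qed
  have "cycle_product HX vs cs = (\<Prod>t<n. \<beta> (int t) * inverse (\<alpha> (int t)))"
    unfolding cycle_product_def lens
    by (rule prod.cong) (simp_all add: \<alpha>_def \<beta>_def cs_def vst vsm)
  hence prod1: "(\<Prod>t<n. \<beta> (int t) * inverse (\<alpha> (int t))) = 1" using cyc[OF cyc1] by simp
  have nza: "\<alpha> k \<noteq> 0" for k unfolding \<alpha>_def by (rule nzH[OF inC inV adj[THEN conjunct1]])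
  have nzb: "\<beta> k \<noteq> 0" for k unfolding \<beta>_def by (rule nzH[OF inC inV adj[THEN conjunct2]])
  from line1d[OF n1 nza nzb pa pb prod1] obtain u where
    u: "(\<forall>k. u k \<noteq> 0) \<and> (\<forall>k. u k = u (k mod int n)) \<and> (\<forall>k. \<alpha> k * u k = \<beta> k * u (k+1))"
    by (elim exE) (rule that)
  show ?thesis
    apply (rule exI[of _ u])
    using u unfolding \<alpha>_def \<beta>_def .
qed

end



lemma zalg:
  fixes pa qa pb qb r y za zb ta tb :: "'a::field"
  assumes c2: "(1::'a) + 1 = 0" and nz: "qa \<noteq> 0" "r \<noteq> 0" "ta \<noteq> 0" "tb \<noteq> 0"
    and o1: "pa*za + qa*y = 0" and o2: "pb*zb + qb*y = 0" and rel: "qb*ta = r*tb"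
  shows "za * (pa/(qa*ta)) + zb * (pb/(r*tb)) = 0"
proof -
  have m: "a + b = 0 \<Longrightarrow> a = b" for a b :: 'a
  proof -
    assume "a + b = 0"
    hence "a = - b" by (simp add: eq_neg_iff_add_eq_0)
    moreover have "b + b = (1+1)*b" by (simp add: algebra_simps)
    hence "- b = b" using c2 by (simp add: neg_eq_iff_add_eq_0)
    ultimately show "a = b" by simp
  qed
  have e1: "pa*za = qa*y" using m[OF o1] .
  have e2: "pb*zb = qb*y" using m[OF o2] .
  have qb: "qb \<noteq> 0" using rel nz by auto
  have "za * (pa/(qa*ta)) = y / ta" using e1 nz by (simp add: field_simps)
  moreover have "zb * (pb/(r*tb)) = y / ta"
  proof -
    have "zb * (pb/(r*tb)) = qb*y/(r*tb)" using e2 by (simp add: field_simps)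
    also have "\<dots> = qb*y/(qb*ta)" using rel by simp
    also have "\<dots> = y/ta" using qb by simp
    finally show ?thesis .
  qed
  moreover have "y/ta + y/ta = (1+1)*(y/ta)" by (simp add: algebra_simps)
  ultimately show ?thesis using c2 by simp
qed

context tor begin

lemma per_div:
  assumes "\<And>k. t k = t (k mod int n)"
  shows "t ((b mod (2*int n) + c) div 2) = t ((b + c) div 2)"
proof -
  have "b mod (2*int n) = b - 2*int n*(b div (2*int n))" by (simp add: minus_div_mult_eq_mod[symmetric])
  hence "(b mod (2*int n) + c) div 2 = (b + c) div 2 + int n * (- (b div (2*int n)))"
    by (simp add: algebra_simps)
  hence "((b mod (2*int n) + c) div 2) mod int n = ((b + c) div 2) mod int n" by (simp add: mod_eq_dvd_iff)
  thus ?thesis using assms[of "(b mod (2*int n) + c) div 2"] assms[of "(b + c) div 2"] by simp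
qed

lemma prp2: "pr n a (2*k + c) = pr n a (2*(k mod int n) + c)"
proof (rule pr_congI[OF n1])
  show "2 * int n dvd (a - a)" by simp
  have e: "k = k mod int n + int n * (k div int n)" by (rule mod_mult_div_eq[symmetric])
  have "2*k + c - (2*(k mod int n) + c) = 2 * (k - k mod int n)" by simp
  also have "k - k mod int n = int n * (k div int n)" by (rule minus_mod_eq_mult_div)
  finally have "2*k + c - (2*(k mod int n) + c) = 2 * int n * (k div int n)" by simp
  thus "2 * int n dvd (2*k + c - (2*(k mod int n) + c))" by simp
qed

lemma prp1: "pr n (2*k + c) b = pr n (2*(k mod int n) + c) b"
proof (rule pr_congI[OF n1])
  show "2 * int n dvd (b - b)" by simp
  have e: "k = k mod int n + int n * (k div int n)" by (rule mod_mult_div_eq[symmetric])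
  have "2*k + c - (2*(k mod int n) + c) = 2 * (k - k mod int n)" by simp
  also have "k - k mod int n = int n * (k div int n)" by (rule minus_mod_eq_mult_div)
  finally have "2*k + c - (2*(k mod int n) + c) = 2 * int n * (k div int n)" by simp
  thus "2 * int n dvd (2*k + c - (2*(k mod int n) + c))" by simp
qed

lemma pri2: "pr n a (2*k + c) = pr n a' (2*k' + c) \<Longrightarrow> k mod int n = k' mod int n"
proof -
  assume "pr n a (2*k + c) = pr n a' (2*k' + c)"
  hence "2 * int n dvd (2*k + c - (2*k' + c))" using pr_eq[OF n1] by blast
  moreover have "2*k + c - (2*k' + c) = 2 * (k - k')" by simp
  ultimately have "2 * int n dvd 2 * (k - k')" by simp
  hence "int n dvd (k - k')" using dvd_times_left_cancel_iff[of 2 "int n" "k - k'"] by auto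
  thus ?thesis by (simp add: mod_eq_dvd_iff)
qed

lemma pri1: "pr n (2*k + c) b = pr n (2*k' + c) b' \<Longrightarrow> k mod int n = k' mod int n"
proof -
  assume "pr n (2*k + c) b = pr n (2*k' + c) b'"
  hence "2 * int n dvd (2*k + c - (2*k' + c))" using pr_eq[OF n1] by blast
  moreover have "2*k + c - (2*k' + c) = 2 * (k - k')" by simp
  ultimately have "2 * int n dvd 2 * (k - k')" by simp
  hence "int n dvd (k - k')" using dvd_times_left_cancel_iff[of 2 "int n" "k - k'"] by auto
  thus ?thesis by (simp add: mod_eq_dvd_iff)
qed

lemma even_modN: "even (x mod (2*int n)) \<longleftrightarrow> even x"
  by (simp add: even_iff_mod_2_eq_zero mod_mod_cancel del: even_iff_mod_2_eq_zero[symmetric])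

lemma mod_ne1: "even x \<Longrightarrow> x mod (2*int n) \<noteq> 1"
  using even_modN[of x] by auto

lemma mod_ne0: "odd x \<Longrightarrow> x mod (2*int n) \<noteq> 0"
  using even_modN[of x] by auto

lemma CX_pr: "c \<in> tor_CX n \<Longrightarrow> \<exists>i j. c = pr n i j \<and> odd i \<and> even j \<and> i mod (2*int n) = i \<and> j mod (2*int n) = j"
proof -
  assume c: "c \<in> tor_CX n"
  obtain a b where ab: "c = (a,b)" by (cases c)
  have "a < 2*n" "b < 2*n" "odd a" "even b" using c ab by (auto simp: tor_CX_def)
  thus ?thesis using ab pr_nat[of a n b] by (intro exI[of _ "int a"] exI[of _ "int b"]) (auto simp: zmod_int[symmetric])
qed

lemma CZ_pr: "c \<in> tor_CZ n \<Longrightarrow> \<exists>i j. c = pr n i j \<and> even i \<and> odd j \<and> i mod (2*int n) = i \<and> j mod (2*int n) = j"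
proof -
  assume c: "c \<in> tor_CZ n"
  obtain a b where ab: "c = (a,b)" by (cases c)
  have "a < 2*n" "b < 2*n" "even a" "odd b" using c ab by (auto simp: tor_CZ_def)
  thus ?thesis using ab pr_nat[of a n b] by (intro exI[of _ "int a"] exI[of _ "int b"]) (auto simp: zmod_int[symmetric])
qed

lemma XV_line:
  "\<exists>t. (\<forall>k. t k \<noteq> 0) \<and> (\<forall>k. t k = t (k mod int n)) \<and>
     (\<forall>k. HX (pr n 1 (2*k+2)) (pr n 1 (2*k+1)) * t k = HX (pr n 1 (2*k+2)) (pr n 1 (2*k+3)) * t (k+1))"
proof -
  define Cf where "Cf k = pr n 1 (2*k)" for k
  define Vf where "Vf k = pr n 1 (2*k+1)" for k
  have "\<exists>t. (\<forall>k. t k \<noteq> 0) \<and> (\<forall>k. t k = t (k mod int n)) \<and>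
     (\<forall>k. HX (Cf (k+1)) (Vf k) * t k = HX (Cf (k+1)) (Vf (k+1)) * t (k+1))"
  proof (rule line_from_cycle)
    show "Cf k = Cf (k mod int n)" for k unfolding Cf_def using prp2[of 1 k 0] by simp
    show "Vf k = Vf (k mod int n)" for k unfolding Vf_def using prp2[of 1 k 1] by simp
    show "a mod int n = b mod int n" if "Cf a = Cf b" for a b
      using that pri2[of 1 a 0 1 b] unfolding Cf_def by simp
    show "a mod int n = b mod int n" if "Vf a = Vf b" for a b
      using that pri2[of 1 a 1 1 b] unfolding Vf_def by simp
    show "Vf k \<in> tor_V n" for k unfolding Vf_def by (simp add: pr_V[OF n1])
    show "Cf k \<in> tor_CX n" for k unfolding Cf_def by (simp add: pr_CX[OF n1])
    show "tor_adj n (Cf (k+1)) (Vf k) \<and> tor_adj n (Cf (k+1)) (Vf (k+1))" for k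
    proof -
      have e1: "2*(k+1) - 1 = 2*k+1" "2*(k+1) + 1 = 2*(k+1)+1" by simp_all
      show ?thesis unfolding Cf_def Vf_def pr_adj[OF n1]
        by (simp add: algebra_simps)
    qed
  qed
  moreover have "Cf (k+1) = pr n 1 (2*k+2)" "Vf (k+1) = pr n 1 (2*k+3)" "Vf k = pr n 1 (2*k+1)" for k
    unfolding Cf_def Vf_def by (simp_all add: algebra_simps)
  ultimately show ?thesis by simp
qed

lemma XH_line:
  "\<exists>t. (\<forall>k. t k \<noteq> 0) \<and> (\<forall>k. t k = t (k mod int n)) \<and>
     (\<forall>k. HX (pr n (2*k+1) 0) (pr n (2*k) 0) * t k = HX (pr n (2*k+1) 0) (pr n (2*k+2) 0) * t (k+1))"
proof -
  define Cf where "Cf k = pr n (2*k + -1) 0" for k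
  define Vf where "Vf k = pr n (2*k+0) 0" for k
  have "\<exists>t. (\<forall>k. t k \<noteq> 0) \<and> (\<forall>k. t k = t (k mod int n)) \<and>
     (\<forall>k. HX (Cf (k+1)) (Vf k) * t k = HX (Cf (k+1)) (Vf (k+1)) * t (k+1))"
  proof (rule line_from_cycle)
    show "Cf k = Cf (k mod int n)" for k unfolding Cf_def using prp1[of k "-1" 0] by simp
    show "Vf k = Vf (k mod int n)" for k unfolding Vf_def using prp1[of k 0 0] by simp
    show "a mod int n = b mod int n" if "Cf a = Cf b" for a b
      using that pri1[of a "-1" 0 b 0] unfolding Cf_def by simp
    show "a mod int n = b mod int n" if "Vf a = Vf b" for a b
      using that pri1[of a 0 0 b 0] unfolding Vf_def by simp
    show "Vf k \<in> tor_V n" for k unfolding Vf_def by (simp add: pr_V[OF n1])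
    show "Cf k \<in> tor_CX n" for k unfolding Cf_def by (simp add: pr_CX[OF n1])
    show "tor_adj n (Cf (k+1)) (Vf k) \<and> tor_adj n (Cf (k+1)) (Vf (k+1))" for k
      unfolding Cf_def Vf_def pr_adj[OF n1] by (simp add: algebra_simps)
  qed
  moreover have "Cf (k+1) = pr n (2*k+1) 0" "Vf (k+1) = pr n (2*k+2) 0" "Vf k = pr n (2*k) 0" for k
    unfolding Cf_def Vf_def by (simp_all add: algebra_simps)
  ultimately show ?thesis by simp
qed

end



context tor begin

lemma sum_single:
  assumes "p \<in> tor_V n" "\<And>v. v \<in> tor_V n \<Longrightarrow> v \<noteq> p \<Longrightarrow> g v = 0"
  shows "(\<Sum>v\<in>tor_V n. g v) = g p"
proof -
  have "(\<Sum>v\<in>tor_V n. g v) = (\<Sum>v\<in>{p}. g v)"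
    by (rule sum.mono_neutral_right[OF finite_V]) (use assms in auto)
  thus ?thesis by simp
qed

lemma fst_pr: "fst (pr n a b) = nat (a mod (2*int n))" by (simp add: pr_def)
lemma snd_pr: "snd (pr n a b) = nat (b mod (2*int n))" by (simp add: pr_def)
lemma nat_mod_eq: "nat (a mod (2*int n)) = c \<longleftrightarrow> a mod (2*int n) = int c"
  using n1 by auto

lemma exX: "\<exists>x. x \<in> CXc \<and> x \<notin> dual_code n CZc \<and> hweight n x = n"
proof -
  obtain t where tnz: "\<And>k. t k \<noteq> 0" and tper: "\<And>k. t k = t (k mod int n)"
    and trel: "\<And>k. HX (pr n 1 (2*k+2)) (pr n 1 (2*k+1)) * t k = HX (pr n 1 (2*k+2)) (pr n 1 (2*k+3)) * t (k+1)"
    using XV_line by blast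
  obtain t' where tnz': "\<And>k. t' k \<noteq> 0" and tper': "\<And>k. t' k = t' (k mod int n)"
    and trel': "\<And>k. HX (pr n (2*k+1) 0) (pr n (2*k) 0) * t' k = HX (pr n (2*k+1) 0) (pr n (2*k+2) 0) * t' (k+1)"
    using XH_line by blast
  define xV where "xV v = (if v \<in> tor_V n \<and> fst v = 1 then t ((int (snd v) - 1) div 2) else 0)" for v
  have xVe: "xV (pr n a b) = (if a mod (2*int n) = 1 then t ((b - 1) div 2) else 0)" if "even (a+b)" for a b
  proof -
    have "pr n a b \<in> tor_V n" using that by (simp add: pr_V[OF n1])
    moreover have "t ((b mod (2*int n) + -1) div 2) = t ((b + -1) div 2)" by (rule per_div[where t=t, OF tper])
    ultimately show ?thesis unfolding xV_def fst_pr snd_pr nat_mod_eq using n1 by simp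
  qed
  have xVin: "xV \<in> CXc"
    unfolding code_ker_def
  proof (intro CollectI conjI ballI)
    show "xV \<in> vecs n" by (simp add: vecs_def xV_def)
    fix c assume c: "c \<in> tor_CX n"
    then obtain i j where ij: "c = pr n i j" "odd i" "even j" "i mod (2*int n) = i" "j mod (2*int n) = j"
      using CX_pr by blast
    have s: "(\<Sum>v\<in>tor_V n. HX c v * xV v) =
       HX c (pr n (i+1) j) * xV (pr n (i+1) j) + HX c (pr n (i-1) j) * xV (pr n (i-1) j) +
       HX c (pr n i (j+1)) * xV (pr n i (j+1)) + HX c (pr n i (j-1)) * xV (pr n i (j-1))"
      unfolding ij(1) by (rule sum_nbrs[OF n2 labX]) (use c ij in simp_all)
    have z1: "xV (pr n (i+1) j) = 0" "xV (pr n (i-1) j) = 0"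
      using xVe[of "i+1" j] xVe[of "i-1" j] mod_ne1[of "i+1"] mod_ne1[of "i-1"] ij by simp_all
    show "(\<Sum>v\<in>tor_V n. HX c v * xV v) = 0"
    proof (cases "i mod (2*int n) = 1")
      case False
      have "xV (pr n i (j+1)) = 0" "xV (pr n i (j-1)) = 0"
        using xVe[of i "j+1"] xVe[of i "j-1"] ij False by simp_all
      thus ?thesis using s z1 by simp
    next
      case True
      hence i1: "i = 1" using ij by simp
      define m where "m = j div 2"
      have jm: "j = 2*m" using ij by (simp add: m_def)
      have e1: "xV (pr n i (j+1)) = t m" using xVe[of i "j+1"] ij True by (simp add: jm)
      have e2: "xV (pr n i (j-1)) = t (m-1)"
      proof -
        have "(j - 1 - 1) div 2 = m - 1" by (simp add: jm)
        thus ?thesis using xVe[of i "j-1"] ij True by simp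
      qed
      have r: "HX (pr n 1 (2*(m-1)+2)) (pr n 1 (2*(m-1)+1)) * t (m-1) = HX (pr n 1 (2*(m-1)+2)) (pr n 1 (2*(m-1)+3)) * t (m-1+1)"
        by (rule trel)
      have a1: "2*(m-1)+2 = j" "2*(m-1)+1 = j-1" "2*(m-1)+3 = j+1" "m-1+1 = m" by (simp_all add: jm)
      have h: "HX c (pr n i (j-1)) * t (m-1) = HX c (pr n i (j+1)) * t m"
        using r unfolding a1 ij(1) i1 .
      have "HX c (pr n i (j+1)) * xV (pr n i (j+1)) + HX c (pr n i (j-1)) * xV (pr n i (j-1))
          = HX c (pr n i (j+1)) * t m + HX c (pr n i (j+1)) * t m"
        by (simp only: e1 e2 h)
      hence "HX c (pr n i (j+1)) * xV (pr n i (j+1)) + HX c (pr n i (j-1)) * xV (pr n i (j-1)) = 0"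
        by (simp only: xx)
      thus ?thesis using s z1 by simp
    qed
  qed
  have wt: "hweight n xV = n"
  proof -
    have "{v \<in> tor_V n. xV v \<noteq> 0} = (\<lambda>k::nat. (1::nat, 2*k+1)) ` {..<n}"
    proof (rule Set.set_eqI, rule iffI)
      fix v assume v: "v \<in> {v \<in> tor_V n. xV v \<noteq> 0}"
      obtain a b where ab: "v = (a,b)" by (cases v)
      have "a = 1" using v ab by (auto simp: xV_def split: if_splits)
      moreover have "b < 2*n" "even (a+b)" using v ab by (auto simp: tor_V_def)
      ultimately have "b = 2*(b div 2) + 1" "b div 2 < n" by auto
      thus "v \<in> (\<lambda>k::nat. (1::nat, 2*k+1)) ` {..<n}" using ab \<open>a = 1\<close> by blast
    next
      fix v assume "v \<in> (\<lambda>k::nat. (1::nat, 2*k+1)) ` {..<n}"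
      then obtain k where k: "k < n" "v = (1, 2*k+1)" by auto
      have "v \<in> tor_V n" using k by (auto simp: tor_V_def)
      thus "v \<in> {v \<in> tor_V n. xV v \<noteq> 0}" using k tnz by (simp add: xV_def)
    qed
    moreover have "inj_on (\<lambda>k. (1::nat, 2*k+1)) {..<n}" by (auto simp: inj_on_def)
    ultimately show ?thesis unfolding hweight_def by (simp add: card_image)
  qed
  define Ch where "Ch k = pr n (2*k - 1) 0" for k
  define Wh where "Wh k = pr n (2*k - 1) 1" for k
  define Vh where "Vh k = pr n (2*k) 0" for k
  define U where "U k = HX (Ch k) (Wh k) / (HX (Ch k) (Vh k) * t' k)" for k
  have Uper: "U k = U (k mod int n)" for k
  proof -
    have "Ch k = Ch (k mod int n)" "Wh k = Wh (k mod int n)" "Vh k = Vh (k mod int n)"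
      unfolding Ch_def Wh_def Vh_def using prp1[of k "-1" 0] prp1[of k "-1" 1] prp1[of k 0 0] by simp_all
    thus ?thesis unfolding U_def using tper'[of k] by simp
  qed
  have nzCV: "HX (Ch k) (Vh k) \<noteq> 0" "HX (Ch k) (Wh k) \<noteq> 0" for k
  proof -
    have "odd (2*k - 1)" by simp
    from lab_nz[OF n2 labX, of "2*k-1" 0] this
    show "HX (Ch k) (Vh k) \<noteq> 0" "HX (Ch k) (Wh k) \<noteq> 0"
      unfolding Ch_def Vh_def Wh_def by (simp_all add: pr_CX[OF n1])
  qed
  have Unz: "U k \<noteq> 0" for k unfolding U_def using nzCV tnz' by simp
  define zH where "zH v = (if v \<in> tor_V n \<and> snd v = 1 then U ((int (fst v) + 1) div 2) else 0)" for v
  have zHe: "zH (pr n a b) = (if b mod (2*int n) = 1 then U ((a + 1) div 2) else 0)" if "even (a+b)" for a b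
  proof -
    have "pr n a b \<in> tor_V n" using that by (simp add: pr_V[OF n1])
    moreover have "U ((a mod (2*int n) + 1) div 2) = U ((a + 1) div 2)" by (rule per_div[where t=U, OF Uper])
    ultimately show ?thesis unfolding zH_def fst_pr snd_pr nat_mod_eq using n1 by simp
  qed
  have zHin: "zH \<in> CZc"
    unfolding code_ker_def
  proof (intro CollectI conjI ballI)
    show "zH \<in> vecs n" by (simp add: vecs_def zH_def)
    fix c assume c: "c \<in> tor_CZ n"
    then obtain i j where ij: "c = pr n i j" "even i" "odd j" "i mod (2*int n) = i" "j mod (2*int n) = j"
      using CZ_pr by blast
    have s: "(\<Sum>v\<in>tor_V n. HZ c v * zH v) =
       HZ c (pr n (i+1) j) * zH (pr n (i+1) j) + HZ c (pr n (i-1) j) * zH (pr n (i-1) j) +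
       HZ c (pr n i (j+1)) * zH (pr n i (j+1)) + HZ c (pr n i (j-1)) * zH (pr n i (j-1))"
      unfolding ij(1) by (rule sum_nbrs[OF n2 labZ]) (use c ij in simp_all)
    have z1: "zH (pr n i (j+1)) = 0" "zH (pr n i (j-1)) = 0"
      using zHe[of i "j+1"] zHe[of i "j-1"] mod_ne1[of "j+1"] mod_ne1[of "j-1"] ij by simp_all
    show "(\<Sum>v\<in>tor_V n. HZ c v * zH v) = 0"
    proof (cases "j mod (2*int n) = 1")
      case False
      have "zH (pr n (i+1) j) = 0" "zH (pr n (i-1) j) = 0"
        using zHe[of "i+1" j] zHe[of "i-1" j] ij False by simp_all
      thus ?thesis using s z1 by simp
    next
      case True
      hence j1: "j = 1" using ij by simp
      define k where "k = i div 2"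
      have ik: "i = 2*k" using ij by (simp add: k_def)
      have e1: "zH (pr n (i+1) j) = U (k+1)"
      proof -
        have "(i + 1 + 1) div 2 = k + 1" by (simp add: ik)
        thus ?thesis using zHe[of "i+1" j] ij True by (simp add: ac_simps)
      qed
      have e2: "zH (pr n (i-1) j) = U k"
      proof -
        have "(i - 1 + 1) div 2 = k" by (simp add: ik)
        thus ?thesis using zHe[of "i-1" j] ij True by simp
      qed
      have o1: "HX (Ch k) (Vh k) * HZ c (Vh k) + HX (Ch k) (Wh k) * HZ c (Wh k) = 0"
      proof -
        have "odd (2*k-1)" "even (0::int)" by simp_all
        from orthoI[OF this, of 1 1] show ?thesis
          unfolding Ch_def Vh_def Wh_def ij(1) j1 ik by simp
      qed
      have o2: "HX (Ch (k+1)) (Vh k) * HZ c (Vh k) + HX (Ch (k+1)) (Wh (k+1)) * HZ c (Wh (k+1)) = 0"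
      proof -
        have "odd (2*k+1)" "even (0::int)" by simp_all
        from orthoI[OF this, of "-1" 1] show ?thesis
          unfolding Ch_def Vh_def Wh_def ij(1) j1 ik by (simp add: algebra_simps)
      qed
      have rel: "HX (Ch (k+1)) (Vh k) * t' k = HX (Ch (k+1)) (Vh (k+1)) * t' (k+1)"
        using trel'[of k] unfolding Ch_def Vh_def by (simp add: algebra_simps)
      have za: "HZ c (Wh k) * U k + HZ c (Wh (k+1)) * U (k+1) = 0"
        unfolding U_def
      proof (rule zalg[where pa="HX (Ch k) (Wh k)" and qa="HX (Ch k) (Vh k)" and pb="HX (Ch (k+1)) (Wh (k+1))"
          and qb="HX (Ch (k+1)) (Vh k)" and r="HX (Ch (k+1)) (Vh (k+1))" and y="HZ c (Vh k)"
          and ta="t' k" and tb="t' (k+1)"])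
        show "(1::'a) + 1 = 0" by (rule c2)
        show "HX (Ch k) (Vh k) \<noteq> 0" "HX (Ch (k+1)) (Vh (k+1)) \<noteq> 0" "t' k \<noteq> 0" "t' (k+1) \<noteq> 0"
          using nzCV tnz' by auto
        show "HX (Ch k) (Wh k) * HZ c (Wh k) + HX (Ch k) (Vh k) * HZ c (Vh k) = 0"
          using o1 by (simp add: algebra_simps)
        show "HX (Ch (k+1)) (Wh (k+1)) * HZ c (Wh (k+1)) + HX (Ch (k+1)) (Vh k) * HZ c (Vh k) = 0"
          using o2 by (simp add: algebra_simps)
        show "HX (Ch (k+1)) (Vh k) * t' k = HX (Ch (k+1)) (Vh (k+1)) * t' (k+1)" by (rule rel)
      qed
      have w: "Wh k = pr n (i-1) j" "Wh (k+1) = pr n (i+1) j" unfolding Wh_def by (simp_all add: ik j1 algebra_simps)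
      have "HZ c (pr n (i+1) j) * zH (pr n (i+1) j) + HZ c (pr n (i-1) j) * zH (pr n (i-1) j) =
            HZ c (Wh (k+1)) * U (k+1) + HZ c (Wh k) * U k"
        by (simp only: e1 e2 w)
      hence "HZ c (pr n (i+1) j) * zH (pr n (i+1) j) + HZ c (pr n (i-1) j) * zH (pr n (i-1) j) = 0"
        using za by (simp add: add.commute)
      thus ?thesis using s z1 by simp
    qed
  qed
  have "(\<Sum>v\<in>tor_V n. zH v * xV v) = zH (1,1) * xV (1,1)"
  proof (rule sum_single)
    show "(1,1) \<in> tor_V n" using n1 by (simp add: tor_V_def)
    show "zH v * xV v = 0" if "v \<in> tor_V n" "v \<noteq> (1,1)" for v
      using that unfolding zH_def xV_def by (cases v) auto
  qed
  moreover have "xV (1,1) = t 0" using n1 by (simp add: xV_def tor_V_def)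
  moreover have "zH (1,1) = U 1" using n1 by (simp add: zH_def tor_V_def)
  ultimately have "(\<Sum>v\<in>tor_V n. zH v * xV v) \<noteq> 0" using tnz Unz by simp
  hence "xV \<notin> dual_code n CZc" using zHin unfolding dual_code_def by blast
  thus ?thesis using xVin wt by blast
qed

lemma exZ: "\<exists>x. x \<in> CZc \<and> x \<notin> dual_code n CXc \<and> hweight n x = n"
proof -
  obtain t where tnz: "\<And>k. t k \<noteq> 0" and tper: "\<And>k. t k = t (k mod int n)"
    and trel: "\<And>k. HX (pr n 1 (2*k+2)) (pr n 1 (2*k+1)) * t k = HX (pr n 1 (2*k+2)) (pr n 1 (2*k+3)) * t (k+1)"
    using XV_line by blast
  obtain t' where tnz': "\<And>k. t' k \<noteq> 0" and tper': "\<And>k. t' k = t' (k mod int n)"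
    and trel': "\<And>k. HX (pr n (2*k+1) 0) (pr n (2*k) 0) * t' k = HX (pr n (2*k+1) 0) (pr n (2*k+2) 0) * t' (k+1)"
    using XH_line by blast
  define xH where "xH v = (if v \<in> tor_V n \<and> snd v = 0 then t' (int (fst v) div 2) else 0)" for v
  have xHe: "xH (pr n a b) = (if b mod (2*int n) = 0 then t' (a div 2) else 0)" if "even (a+b)" for a b
  proof -
    have "pr n a b \<in> tor_V n" using that by (simp add: pr_V[OF n1])
    moreover have "t' ((a mod (2*int n) + 0) div 2) = t' ((a + 0) div 2)" by (rule per_div[where t=t', OF tper'])
    ultimately show ?thesis unfolding xH_def fst_pr snd_pr nat_mod_eq using n1 by simp
  qed
  have xHin: "xH \<in> CXc"
    unfolding code_ker_def
  proof (intro CollectI conjI ballI)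
    show "xH \<in> vecs n" by (simp add: vecs_def xH_def)
    fix c assume c: "c \<in> tor_CX n"
    then obtain i j where ij: "c = pr n i j" "odd i" "even j" "i mod (2*int n) = i" "j mod (2*int n) = j"
      using CX_pr by blast
    have s: "(\<Sum>v\<in>tor_V n. HX c v * xH v) =
       HX c (pr n (i+1) j) * xH (pr n (i+1) j) + HX c (pr n (i-1) j) * xH (pr n (i-1) j) +
       HX c (pr n i (j+1)) * xH (pr n i (j+1)) + HX c (pr n i (j-1)) * xH (pr n i (j-1))"
      unfolding ij(1) by (rule sum_nbrs[OF n2 labX]) (use c ij in simp_all)
    have z1: "xH (pr n i (j+1)) = 0" "xH (pr n i (j-1)) = 0"
      using xHe[of i "j+1"] xHe[of i "j-1"] mod_ne0[of "j+1"] mod_ne0[of "j-1"] ij by simp_all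
    show "(\<Sum>v\<in>tor_V n. HX c v * xH v) = 0"
    proof (cases "j mod (2*int n) = 0")
      case False
      have "xH (pr n (i+1) j) = 0" "xH (pr n (i-1) j) = 0"
        using xHe[of "i+1" j] xHe[of "i-1" j] ij False by simp_all
      thus ?thesis using s z1 by simp
    next
      case True
      hence j0: "j = 0" using ij by simp
      define m where "m = i div 2"
      have im: "i = 2*m+1" using ij by (simp add: m_def)
      have e1: "xH (pr n (i+1) j) = t' (m+1)"
      proof -
        have "(i+1) div 2 = m+1" by (simp add: im)
        thus ?thesis using xHe[of "i+1" j] ij True by simp
      qed
      have e2: "xH (pr n (i-1) j) = t' m"
      proof -
        have "(i-1) div 2 = m" by (simp add: im)
        thus ?thesis using xHe[of "i-1" j] ij True by simp
      qed
      have a1: "2*m+1 = i" "2*m = i-1" "2*m+2 = i+1" by (simp_all add: im)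
      have h: "HX c (pr n (i-1) j) * t' m = HX c (pr n (i+1) j) * t' (m+1)"
        using trel'[of m] unfolding a1(1) a1(3) unfolding a1(2) ij(1) j0 .
      have "HX c (pr n (i+1) j) * xH (pr n (i+1) j) + HX c (pr n (i-1) j) * xH (pr n (i-1) j)
          = HX c (pr n (i+1) j) * t' (m+1) + HX c (pr n (i+1) j) * t' (m+1)"
        by (simp only: e1 e2 h)
      hence "HX c (pr n (i+1) j) * xH (pr n (i+1) j) + HX c (pr n (i-1) j) * xH (pr n (i-1) j) = 0"
        by (simp only: xx)
      thus ?thesis using s z1 by simp
    qed
  qed
  define Cv where "Cv k = pr n 1 (2*k)" for k
  define Wv where "Wv k = pr n 0 (2*k)" for k
  define Vv where "Vv k = pr n 1 (2*k+1)" for k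
  define U where "U k = HX (Cv k) (Wv k) / (HX (Cv k) (Vv k) * t k)" for k
  have Uper: "U k = U (k mod int n)" for k
  proof -
    have "Cv k = Cv (k mod int n)" "Wv k = Wv (k mod int n)" "Vv k = Vv (k mod int n)"
      unfolding Cv_def Wv_def Vv_def using prp2[of 1 k 0] prp2[of 0 k 0] prp2[of 1 k 1] by simp_all
    thus ?thesis unfolding U_def using tper[of k] by simp
  qed
  have nzCV: "HX (Cv k) (Vv k) \<noteq> 0" "HX (Cv k) (Wv k) \<noteq> 0" for k
  proof -
    have "odd (1::int)" "even (2*k)" by simp_all
    from lab_nz[OF n2 labX, of 1 "2*k"] this
    show "HX (Cv k) (Vv k) \<noteq> 0" "HX (Cv k) (Wv k) \<noteq> 0"
      unfolding Cv_def Vv_def Wv_def by (simp_all add: pr_CX[OF n1])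
  qed
  have Unz: "U k \<noteq> 0" for k unfolding U_def using nzCV tnz by simp
  define zV where "zV v = (if v \<in> tor_V n \<and> fst v = 0 then U (int (snd v) div 2) else 0)" for v
  have zVe: "zV (pr n a b) = (if a mod (2*int n) = 0 then U (b div 2) else 0)" if "even (a+b)" for a b
  proof -
    have "pr n a b \<in> tor_V n" using that by (simp add: pr_V[OF n1])
    moreover have "U ((b mod (2*int n) + 0) div 2) = U ((b + 0) div 2)" by (rule per_div[where t=U, OF Uper])
    ultimately show ?thesis unfolding zV_def fst_pr snd_pr nat_mod_eq using n1 by simp
  qed
  have zVin: "zV \<in> CZc"
    unfolding code_ker_def
  proof (intro CollectI conjI ballI)
    show "zV \<in> vecs n" by (simp add: vecs_def zV_def)
    fix c assume c: "c \<in> tor_CZ n"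
    then obtain i j where ij: "c = pr n i j" "even i" "odd j" "i mod (2*int n) = i" "j mod (2*int n) = j"
      using CZ_pr by blast
    have s: "(\<Sum>v\<in>tor_V n. HZ c v * zV v) =
       HZ c (pr n (i+1) j) * zV (pr n (i+1) j) + HZ c (pr n (i-1) j) * zV (pr n (i-1) j) +
       HZ c (pr n i (j+1)) * zV (pr n i (j+1)) + HZ c (pr n i (j-1)) * zV (pr n i (j-1))"
      unfolding ij(1) by (rule sum_nbrs[OF n2 labZ]) (use c ij in simp_all)
    have z1: "zV (pr n (i+1) j) = 0" "zV (pr n (i-1) j) = 0"
      using zVe[of "i+1" j] zVe[of "i-1" j] mod_ne0[of "i+1"] mod_ne0[of "i-1"] ij by simp_all
    show "(\<Sum>v\<in>tor_V n. HZ c v * zV v) = 0"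
    proof (cases "i mod (2*int n) = 0")
      case False
      have "zV (pr n i (j+1)) = 0" "zV (pr n i (j-1)) = 0"
        using zVe[of i "j+1"] zVe[of i "j-1"] ij False by simp_all
      thus ?thesis using s z1 by simp
    next
      case True
      hence i0: "i = 0" using ij by simp
      define k where "k = j div 2"
      have jk: "j = 2*k+1" using ij by (simp add: k_def)
      have e1: "zV (pr n i (j+1)) = U (k+1)"
      proof -
        have "(j + 1) div 2 = k + 1" by (simp add: jk)
        thus ?thesis using zVe[of i "j+1"] ij True by simp
      qed
      have e2: "zV (pr n i (j-1)) = U k"
      proof -
        have "(j - 1) div 2 = k" by (simp add: jk)
        thus ?thesis using zVe[of i "j-1"] ij True by simp
      qed
      have o1: "HX (Cv k) (Wv k) * HZ c (Wv k) + HX (Cv k) (Vv k) * HZ c (Vv k) = 0"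
      proof -
        have "odd (1::int)" "even (2*k)" by simp_all
        from orthoI[OF this, of "-1" 1] show ?thesis
          unfolding Cv_def Vv_def Wv_def ij(1) i0 jk by simp
      qed
      have o2: "HX (Cv (k+1)) (Wv (k+1)) * HZ c (Wv (k+1)) + HX (Cv (k+1)) (Vv k) * HZ c (Vv k) = 0"
      proof -
        have "odd (1::int)" "even (2*k+2)" by simp_all
        from orthoI[OF this, of "-1" "-1"] show ?thesis
          unfolding Cv_def Vv_def Wv_def ij(1) i0 jk by (simp add: algebra_simps)
      qed
      have rel: "HX (Cv (k+1)) (Vv k) * t k = HX (Cv (k+1)) (Vv (k+1)) * t (k+1)"
        using trel[of k] unfolding Cv_def Vv_def by (simp add: algebra_simps)
      have za: "HZ c (Wv k) * U k + HZ c (Wv (k+1)) * U (k+1) = 0"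
        unfolding U_def
      proof (rule zalg[where pa="HX (Cv k) (Wv k)" and qa="HX (Cv k) (Vv k)" and pb="HX (Cv (k+1)) (Wv (k+1))"
          and qb="HX (Cv (k+1)) (Vv k)" and r="HX (Cv (k+1)) (Vv (k+1))" and y="HZ c (Vv k)"
          and ta="t k" and tb="t (k+1)"])
        show "(1::'a) + 1 = 0" by (rule c2)
        show "HX (Cv k) (Vv k) \<noteq> 0" "HX (Cv (k+1)) (Vv (k+1)) \<noteq> 0" "t k \<noteq> 0" "t (k+1) \<noteq> 0"
          using nzCV tnz by auto
        show "HX (Cv k) (Wv k) * HZ c (Wv k) + HX (Cv k) (Vv k) * HZ c (Vv k) = 0" by (rule o1)
        show "HX (Cv (k+1)) (Wv (k+1)) * HZ c (Wv (k+1)) + HX (Cv (k+1)) (Vv k) * HZ c (Vv k) = 0" by (rule o2)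
        show "HX (Cv (k+1)) (Vv k) * t k = HX (Cv (k+1)) (Vv (k+1)) * t (k+1)" by (rule rel)
      qed
      have w: "Wv k = pr n i (j-1)" "Wv (k+1) = pr n i (j+1)" unfolding Wv_def by (simp_all add: i0 jk algebra_simps)
      have "HZ c (pr n i (j+1)) * zV (pr n i (j+1)) + HZ c (pr n i (j-1)) * zV (pr n i (j-1)) =
            HZ c (Wv (k+1)) * U (k+1) + HZ c (Wv k) * U k"
        by (simp only: e1 e2 w)
      hence "HZ c (pr n i (j+1)) * zV (pr n i (j+1)) + HZ c (pr n i (j-1)) * zV (pr n i (j-1)) = 0"
        using za by (simp add: add.commute)
      thus ?thesis using s z1 by simp
    qed
  qed
  have wt: "hweight n zV = n"
  proof -
    have "{v \<in> tor_V n. zV v \<noteq> 0} = (\<lambda>k::nat. (0::nat, 2*k)) ` {..<n}"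
    proof (rule Set.set_eqI, rule iffI)
      fix v assume v: "v \<in> {v \<in> tor_V n. zV v \<noteq> 0}"
      obtain a b where ab: "v = (a,b)" by (cases v)
      have "a = 0" using v ab by (auto simp: zV_def split: if_splits)
      moreover have "b < 2*n" "even (a+b)" using v ab by (auto simp: tor_V_def)
      ultimately have "b = 2*(b div 2)" "b div 2 < n" by auto
      thus "v \<in> (\<lambda>k::nat. (0::nat, 2*k)) ` {..<n}" using ab \<open>a = 0\<close> by blast
    next
      fix v assume "v \<in> (\<lambda>k::nat. (0::nat, 2*k)) ` {..<n}"
      then obtain k where k: "k < n" "v = (0, 2*k)" by auto
      have "v \<in> tor_V n" using k by (auto simp: tor_V_def)
      thus "v \<in> {v \<in> tor_V n. zV v \<noteq> 0}" using k Unz by (simp add: zV_def)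
    qed
    moreover have "inj_on (\<lambda>k. (0::nat, 2*k)) {..<n}" by (auto simp: inj_on_def)
    ultimately show ?thesis unfolding hweight_def by (simp add: card_image)
  qed
  have "(\<Sum>v\<in>tor_V n. xH v * zV v) = xH (0,0) * zV (0,0)"
  proof (rule sum_single)
    show "(0,0) \<in> tor_V n" using n1 by (simp add: tor_V_def)
    show "xH v * zV v = 0" if "v \<in> tor_V n" "v \<noteq> (0,0)" for v
      using that unfolding xH_def zV_def by (cases v) auto
  qed
  moreover have "xH (0,0) = t' 0" using n1 by (simp add: xH_def tor_V_def)
  moreover have "zV (0,0) = U 0" using n1 by (simp add: zV_def tor_V_def)
  ultimately have "(\<Sum>v\<in>tor_V n. xH v * zV v) \<noteq> 0" using tnz' Unz by simp
  hence "zV \<notin> dual_code n CXc" using xHin unfolding dual_code_def by blast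
  thus ?thesis using zVin wt by blast
qed

end



context tor begin

lemma hw_le: "hweight n x \<le> card (tor_V n)"
  unfolding hweight_def by (rule card_mono[OF finite_V]) auto

lemma main: "Min (hweight n ` (CXc - dual_code n CZc)) = n \<and> Min (hweight n ` (CZc - dual_code n CXc)) = n"
proof
  show "Min (hweight n ` (CXc - dual_code n CZc)) = n"
  proof (rule Min_eqI)
    show "finite (hweight n ` (CXc - dual_code n CZc))"
      by (rule finite_subset[of _ "{..card (tor_V n)}"]) (auto simp: hw_le)
    show "n \<le> y" if "y \<in> hweight n ` (CXc - dual_code n CZc)" for y
      using that lowX by auto
    show "n \<in> hweight n ` (CXc - dual_code n CZc)" using exX by force
  qed
  show "Min (hweight n ` (CZc - dual_code n CXc)) = n"
  proof (rule Min_eqI)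
    show "finite (hweight n ` (CZc - dual_code n CXc))"
      by (rule finite_subset[of _ "{..card (tor_V n)}"]) (auto simp: hw_le)
    show "n \<le> y" if "y \<in> hweight n ` (CZc - dual_code n CXc)" for y
      using that lowZ by auto
    show "n \<in> hweight n ` (CZc - dual_code n CXc)" using exZ by force
  qed
qed

end

theorem lemma5:
  fixes HX HZ :: "nat \<times> nat \<Rightarrow> nat \<times> nat \<Rightarrow> 'a::{field, finite}"
    and n m :: nat
  assumes "n \<ge> 2"
    and "m \<ge> 1"
    and "card (UNIV :: 'a set) = 2 ^ m"
    and "is_labeling n (tor_CX n) HX"
    and "is_labeling n (tor_CZ n) HZ"
    and "dual_code n (code_ker n (tor_CZ n) HZ) \<subseteq> code_ker n (tor_CX n) HX"
    and "\<And>vs cs. is_cycle n (tor_CX n) vs cs \<Longrightarrow> cycle_product HX vs cs = 1"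
  shows "Min (hweight n ` (code_ker n (tor_CX n) HX - dual_code n (code_ker n (tor_CZ n) HZ))) = n \<and>
         Min (hweight n ` (code_ker n (tor_CZ n) HZ - dual_code n (code_ker n (tor_CX n) HX))) = n"
proof -
  have c2: "(1::'a) + 1 = 0" by (rule char2_of_card[OF assms(3) assms(2)])
  interpret tor n HX HZ
    by (rule tor.intro) (use assms c2 in auto)
  show ?thesis by (rule main)
qed



end
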